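(* Let $M>0$, $T\ge1/M$, $y_0\in C^4([0,1])$, $v\in C^4([0,T])$, and for $\varepsilon\in(0,1)$ let $\theta^\varepsilon$ be the solution of $\theta_t+M\theta_x-\varepsilon\theta_{xx}=0$ in $Q_T=(0,1)\times(0,T)$, $\theta(0,t)=\theta(1,t)=0$, $\theta(x,0)=\widetilde P^\varepsilon(x,0)-y_0(x)$, where $\widetilde P^\varepsilon$ is defined in the context and $\widetilde P^\varepsilon(x,0):=\lim_{t\to0^+}\widetilde P^\varepsilon(x,t)$ for $x\in(0,1]$. Let $\gamma\in(0,1/2]$. There exists a constant $c$ independent of $\varepsilon$ such that $$\|\theta^\varepsilon(\cdot,t)\|_{L^2(0,1)}\le c\,e^{-\frac{\varepsilon^\gamma}{\varepsilon}}+c\,\varepsilon^{1/2}e^{-\frac{M^2}{2\varepsilon^\gamma}t}\quad\forall t\in[0,T].$$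
   Context: Notation: $\mathrm{erf}(s)=\frac{2}{\sqrt\pi}\int_0^s e^{-r^2}dr$, $\mathrm{erfc}=1-\mathrm{erf}$. Scaled variables: $w=\frac{x-Mt}{\sqrt\varepsilon}$, $z=\frac{1-x}{\varepsilon}$, $\tau=\frac{1/M-t}{\sqrt\varepsilon}$ (so $M\tau=\frac{1-Mt}{\sqrt\varepsilon}$). Constants: $c^+=y_0(0)$, $c^-=v(0)$, $d^+=y_0'(0)$, $d^-=-v'(0)/M$, $e^+=y_0''(0)$, $e^-=v''(0)/M^2$, $f^+=0$, $f^-=v''(0)/M^3$, $h^+=y_0'''(0)/6$, $h^-=-v'''(0)/(6M^3)$. For $(x,t)$ let $\sigma=+$ if $x>Mt$ and $\sigma=-$ if $x\le Mt$; for $t$ let $s=+$ if $Mt\le1$ and $s=-$ if $Mt>1$. Outer terms: $y^0(x,t)=y_0(x-Mt)$ if $x>Mt$, $=v(t-x/M)$ if $x\le Mt$; $y^1(x,t)=t\,y_0''(x-Mt)$ if $x>Mt$, $=\frac{x}{M^3}v''(t-x/M)$ if $x\le Mt$; $\partial_x y^0(1,t)=y_0'(1-Mt)$ if $Mt<1$, $=-v'(t-1/M)/M$ if $Mt>1$. Inner terms ($w\in\mathbb R$, $t>0$; subscripts $w$ denote $\partial_w$): $W^0(w,t)=c^++\frac{c^--c^+}{2}\mathrm{erfc}(\frac{w}{2\sqrt t})$; $U^0_\varepsilon(w,t)=\frac{c^--c^+}{2}e^{\frac{Mw}{\sqrt\varepsilon}+\frac{M^2t}{\varepsilon}}\mathrm{erfc}(\frac{w}{2\sqrt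 t}+\frac{M\sqrt t}{\sqrt\varepsilon})$; $W^0_\varepsilon=W^0+U^0_\varepsilon$; $W^{1/2}(w,t)=w\big(\frac{d^+-d^-}{2}\mathrm{erf}(\frac{w}{2\sqrt t})+\frac{d^++d^-}{2}\big)+(d^+-d^-)\sqrt{t/\pi}\,e^{-w^2/(4t)}$; $W^1(w,t)=(\frac{w^2}{2}+t)\big(\frac{e^+-e^-}{2}\mathrm{erf}(\frac{w}{2\sqrt t})+\frac{e^++e^-}{2}\big)+\frac{e^+-e^-}{2}w\sqrt{t/\pi}\,e^{-w^2/(4t)}$; $W^{3/2}(w,t)=(\frac{w^3}{2}+3tw)\big((h^+-h^-)\mathrm{erf}(\frac{w}{2\sqrt t})+h^++h^-\big)+(h^+-h^-)(4t+w^2)\sqrt{t/\pi}\,e^{-w^2/(4t)}-f^-\sqrt{t/\pi}\,e^{-w^2/(4t)}+\frac{f^-}{2}w\,\mathrm{erfc}(\frac{w}{2\sqrt t})$. Composite terms (with $w=\frac{x-Mt}{\sqrt\varepsilon}$): $p^0_\varepsilon=y^0(x,t)+W^0_\varepsilon(w,t)-c^\sigma$; $p^{1/2}=W^{1/2}(w,t)-d^\sigma w$; $p^1=y^1(x,t)+W^1(w,t)-e^\sigma(\frac{w^2}{2}+t)$; $p^{3/2}=W^{3/2}(w,t)-h^\sigma(w^3+6tw)-f^\sigma w$. Boundary-layer coefficients (all inner functions evaluated at $(M\tau,t)$): $a_0=y^0(1,t)+W^0_\varepsilon-c^s$; $a_{1/2}=W^{1/2}-M\tau d^s$; $b_{1/2}=W^0_{\varepsilon,w}$;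 $A=y^1(1,t)+W^1-e^s(\frac{(M\tau)^2}{2}+t)$; $B=-\partial_xy^0(1,t)-W^{1/2}_w+d^s$; $C^\varepsilon=W^0_{\varepsilon,ww}$; $\widetilde A=W^{3/2}-h^s((M\tau)^3+6tM\tau)-f^sM\tau$; $\widetilde B=-W^1_w+M\tau e^s$; $\widetilde C=W^{1/2}_{ww}$; $\widetilde D^\varepsilon=-W^0_{\varepsilon,www}$. Approximation: $\widetilde P^\varepsilon(x,t)=p^0_\varepsilon+\sqrt\varepsilon p^{1/2}+\varepsilon p^1+\varepsilon^{3/2}p^{3/2}+e^{-Mz}\big[-a_0-\sqrt\varepsilon(a_{1/2}+b_{1/2}z)+\varepsilon(-A+Bz-C^\varepsilon\frac{z^2}{2})+\varepsilon^{3/2}(-\widetilde A+\widetilde Bz-\widetilde C\frac{z^2}{2}+\widetilde D^\varepsilon\frac{z^3}{6})\big]$, for $(x,t)\in Q_T$. *)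

theory Defs
  imports "HOL-Analysis.Analysis"
begin

definition erf :: "real \<Rightarrow> real" where
  "erf s = 2 / sqrt pi * (LBINT r=0..s. exp (-(r^2)))"

definition erfc :: "real \<Rightarrow> real" where
  "erfc s = 1 - erf s"

text \<open>D 0 is the function, D k its k-th derivative (one-sided at the endpoints).\<close>
definition C4_on :: "real set \<Rightarrow> (nat \<Rightarrow> real \<Rightarrow> real) \<Rightarrow> bool" where
  "C4_on S D \<longleftrightarrow>
     (\<forall>k<4. \<forall>x\<in>S. (D k has_real_derivative D (Suc k) x) (at x within S))
     \<and> continuous_on S (D 4)"

definition sel :: "bool \<Rightarrow> real \<Rightarrow> real \<Rightarrow> real" where
  "sel b p m = (if b then p else m)"

definition cP :: "(nat \<Rightarrow> real \<Rightarrow> real) \<Rightarrow> real" where "cP Y = Y 0 0"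
definition cM :: "(nat \<Rightarrow> real \<Rightarrow> real) \<Rightarrow> real" where "cM V = V 0 0"
definition dP :: "(nat \<Rightarrow> real \<Rightarrow> real) \<Rightarrow> real" where "dP Y = Y 1 0"
definition dM :: "real \<Rightarrow> (nat \<Rightarrow> real \<Rightarrow> real) \<Rightarrow> real" where "dM M V = - V 1 0 / M"
definition eP :: "(nat \<Rightarrow> real \<Rightarrow> real) \<Rightarrow> real" where "eP Y = Y 2 0"
definition eM :: "real \<Rightarrow> (nat \<Rightarrow> real \<Rightarrow> real) \<Rightarrow> real" where "eM M V = V 2 0 / M^2"
definition fP :: real where "fP = 0"
definition fM :: "real \<Rightarrow> (nat \<Rightarrow> real \<Rightarrow> real) \<Rightarrow> real" where "fM M V = V 2 0 / M^3"
definition hP :: "(nat \<Rightarrow> real \<Rightarrow> real) \<Rightarrow> real" where "hP Y = Y 3 0 / 6"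
definition hM :: "real \<Rightarrow> (nat \<Rightarrow> real \<Rightarrow> real) \<Rightarrow> real" where "hM M V = - V 3 0 / (6 * M^3)"

definition y0o :: "real \<Rightarrow> (nat \<Rightarrow> real \<Rightarrow> real) \<Rightarrow> (nat \<Rightarrow> real \<Rightarrow> real) \<Rightarrow> real \<Rightarrow> real \<Rightarrow> real" where
  "y0o M Y V x t = (if x > M * t then Y 0 (x - M * t) else V 0 (t - x / M))"

definition y1o :: "real \<Rightarrow> (nat \<Rightarrow> real \<Rightarrow> real) \<Rightarrow> (nat \<Rightarrow> real \<Rightarrow> real) \<Rightarrow> real \<Rightarrow> real \<Rightarrow> real" where
  "y1o M Y V x t = (if x > M * t then t * Y 2 (x - M * t) else x / M^3 * V 2 (t - x / M))"

text \<open>\<partial>_x y^0(1,t); at M t = 1 we use the first branch (convention s = + iff M t \<le> 1).\<close>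
definition dxy0 :: "real \<Rightarrow> (nat \<Rightarrow> real \<Rightarrow> real) \<Rightarrow> (nat \<Rightarrow> real \<Rightarrow> real) \<Rightarrow> real \<Rightarrow> real" where
  "dxy0 M Y V t = (if M * t \<le> 1 then Y 1 (1 - M * t) else - V 1 (t - 1 / M) / M)"

definition W0 :: "real \<Rightarrow> (nat \<Rightarrow> real \<Rightarrow> real) \<Rightarrow> (nat \<Rightarrow> real \<Rightarrow> real) \<Rightarrow> real \<Rightarrow> real \<Rightarrow> real" where
  "W0 M Y V w t = cP Y + (cM V - cP Y) / 2 * erfc (w / (2 * sqrt t))"

definition U0 :: "real \<Rightarrow> (nat \<Rightarrow> real \<Rightarrow> real) \<Rightarrow> (nat \<Rightarrow> real \<Rightarrow> real) \<Rightarrow> real \<Rightarrow> real \<Rightarrow> real \<Rightarrow> real" where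
  "U0 M Y V \<epsilon> w t = (cM V - cP Y) / 2 * exp (M * w / sqrt \<epsilon> + M^2 * t / \<epsilon>)
      * erfc (w / (2 * sqrt t) + M * sqrt t / sqrt \<epsilon>)"

definition W0e :: "real \<Rightarrow> (nat \<Rightarrow> real \<Rightarrow> real) \<Rightarrow> (nat \<Rightarrow> real \<Rightarrow> real) \<Rightarrow> real \<Rightarrow> real \<Rightarrow> real \<Rightarrow> real" where
  "W0e M Y V \<epsilon> w t = W0 M Y V w t + U0 M Y V \<epsilon> w t"

definition W12 :: "real \<Rightarrow> (nat \<Rightarrow> real \<Rightarrow> real) \<Rightarrow> (nat \<Rightarrow> real \<Rightarrow> real) \<Rightarrow> real \<Rightarrow> real \<Rightarrow> real" where
  "W12 M Y V w t = w * ((dP Y - dM M V) / 2 * erf (w / (2 * sqrt t)) + (dP Y + dM M V) / 2)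
      + (dP Y - dM M V) * sqrt (t / pi) * exp (- (w^2) / (4 * t))"

definition W1 :: "real \<Rightarrow> (nat \<Rightarrow> real \<Rightarrow> real) \<Rightarrow> (nat \<Rightarrow> real \<Rightarrow> real) \<Rightarrow> real \<Rightarrow> real \<Rightarrow> real" where
  "W1 M Y V w t = (w^2 / 2 + t) * ((eP Y - eM M V) / 2 * erf (w / (2 * sqrt t)) + (eP Y + eM M V) / 2)
      + (eP Y - eM M V) / 2 * w * sqrt (t / pi) * exp (- (w^2) / (4 * t))"

definition W32 :: "real \<Rightarrow> (nat \<Rightarrow> real \<Rightarrow> real) \<Rightarrow> (nat \<Rightarrow> real \<Rightarrow> real) \<Rightarrow> real \<Rightarrow> real \<Rightarrow> real" where
  "W32 M Y V w t = (w^3 / 2 + 3 * t * w) * ((hP Y - hM M V) * erf (w / (2 * sqrt t)) + hP Y + hM M V)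
      + (hP Y - hM M V) * (4 * t + w^2) * sqrt (t / pi) * exp (- (w^2) / (4 * t))
      - fM M V * sqrt (t / pi) * exp (- (w^2) / (4 * t))
      + fM M V / 2 * w * erfc (w / (2 * sqrt t))"

definition Ptil :: "real \<Rightarrow> (nat \<Rightarrow> real \<Rightarrow> real) \<Rightarrow> (nat \<Rightarrow> real \<Rightarrow> real) \<Rightarrow> real \<Rightarrow> real \<Rightarrow> real \<Rightarrow> real" where
  "Ptil M Y V \<epsilon> x t =
    (let w = (x - M * t) / sqrt \<epsilon>;
         z = (1 - x) / \<epsilon>;
         \<tau> = (1 / M - t) / sqrt \<epsilon>;
         m = M * \<tau>;
         \<sigma> = (x > M * t);
         s = (M * t \<le> 1);
         p0 = y0o M Y V x t + W0e M Y V \<epsilon> w t - sel \<sigma> (cP Y) (cM V);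
         p12 = W12 M Y V w t - sel \<sigma> (dP Y) (dM M V) * w;
         p1 = y1o M Y V x t + W1 M Y V w t - sel \<sigma> (eP Y) (eM M V) * (w^2 / 2 + t);
         p32 = W32 M Y V w t - sel \<sigma> (hP Y) (hM M V) * (w^3 + 6 * t * w) - sel \<sigma> fP (fM M V) * w;
         a0 = y0o M Y V 1 t + W0e M Y V \<epsilon> m t - sel s (cP Y) (cM V);
         a12 = W12 M Y V m t - m * sel s (dP Y) (dM M V);
         b12 = deriv (\<lambda>u. W0e M Y V \<epsilon> u t) m;
         A = y1o M Y V 1 t + W1 M Y V m t - sel s (eP Y) (eM M V) * (m^2 / 2 + t);
         B = - dxy0 M Y V t - deriv (\<lambda>u. W12 M Y V u t) m + sel s (dP Y) (dM M V);
         C = deriv (deriv (\<lambda>u. W0e M Y V \<epsilon> u t)) m;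
         At = W32 M Y V m t - sel s (hP Y) (hM M V) * (m^3 + 6 * t * m) - sel s fP (fM M V) * m;
         Bt = - deriv (\<lambda>u. W1 M Y V u t) m + m * sel s (eP Y) (eM M V);
         Ct = deriv (deriv (\<lambda>u. W12 M Y V u t)) m;
         Dt = - deriv (deriv (deriv (\<lambda>u. W0e M Y V \<epsilon> u t))) m
     in p0 + sqrt \<epsilon> * p12 + \<epsilon> * p1 + \<epsilon> powr (3/2) * p32
        + exp (- M * z) * (- a0 - sqrt \<epsilon> * (a12 + b12 * z)
             + \<epsilon> * (- A + B * z - C * z^2 / 2)
             + \<epsilon> powr (3/2) * (- At + Bt * z - Ct * z^2 / 2 + Dt * z^3 / 6)))"

definition Ptil0 :: "real \<Rightarrow> (nat \<Rightarrow> real \<Rightarrow> real) \<Rightarrow> (nat \<Rightarrow> real \<Rightarrow> real) \<Rightarrow> real \<Rightarrow> real \<Rightarrow> real" where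
  "Ptil0 M Y V \<epsilon> x = Lim (at_right 0) (\<lambda>t. Ptil M Y V \<epsilon> x t)"

definition L2norm01 :: "(real \<Rightarrow> real) \<Rightarrow> real" where
  "L2norm01 f = sqrt (LINT x:{0..1}|lborel. (f x)^2)"

definition is_solution :: "real \<Rightarrow> real \<Rightarrow> real \<Rightarrow> (real \<Rightarrow> real) \<Rightarrow> (real \<Rightarrow> real \<Rightarrow> real) \<Rightarrow> bool" where
  "is_solution M \<epsilon> T \<theta>0 \<theta> \<longleftrightarrow>
    (\<exists>\<theta>x \<theta>xx \<theta>t.
       (\<forall>x\<in>{0<..<1}. \<forall>t\<in>{0<..<T}.
          ((\<lambda>y. \<theta> y t) has_real_derivative \<theta>x x t) (at x) \<and>
          ((\<lambda>y. \<theta>x y t) has_real_derivative \<theta>xx x t) (at x) \<and>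
          ((\<lambda>s. \<theta> x s) has_real_derivative \<theta>t x t) (at t) \<and>
          \<theta>t x t + M * \<theta>x x t - \<epsilon> * \<theta>xx x t = 0) \<and>
       continuous_on ({0<..<1} \<times> {0<..<T}) (\<lambda>(x,t). \<theta>x x t) \<and>
       continuous_on ({0<..<1} \<times> {0<..<T}) (\<lambda>(x,t). \<theta>xx x t) \<and>
       continuous_on ({0<..<1} \<times> {0<..<T}) (\<lambda>(x,t). \<theta>t x t)) \<and>
    continuous_on ({0..1} \<times> {0<..T}) (\<lambda>(x,t). \<theta> x t) \<and>
    (\<forall>t\<in>{0<..T}. \<theta> 0 t = 0 \<and> \<theta> 1 t = 0) \<and>
    (\<forall>x\<in>{0<..<1}. \<theta> x 0 = \<theta>0 x) \<and>
    ((\<lambda>t. LINT x:{0..1}|lborel. (\<theta> x t - \<theta>0 x)^2) \<longlongrightarrow> 0) (at_right 0)"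

end

theory Submission
  imports Defs "HOL-Probability.Distributions" "HOL-Real_Asymp.Real_Asymp"
begin



lemma erf_deriv: "(erf has_real_derivative (2 / sqrt pi * exp (-(s^2)))) (at s)"
proof -
  have "((\<lambda>u. LBINT y=ereal 0..u. exp (-(y^2))) has_vector_derivative exp (-(s^2))) (at s within {-\<bar>s\<bar>-1..\<bar>s\<bar>+1})"
    by (rule interval_integral_FTC2) (auto intro!: continuous_intros)
  then have "((\<lambda>u. LBINT y=0..u. exp (-(y^2))) has_vector_derivative exp (-(s^2))) (at s within {-\<bar>s\<bar>-1..\<bar>s\<bar>+1})"
    by (simp add: zero_ereal_def)
  then have "((\<lambda>u. LBINT y=0..u. exp (-(y^2))) has_vector_derivative exp (-(s^2))) (at s)"
    by (subst (asm) at_within_interior) auto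
  then have "((\<lambda>u. LBINT y=0..u. exp (-(y^2))) has_real_derivative exp (-(s^2))) (at s)"
    by (simp add: has_real_derivative_iff_has_vector_derivative)
  from DERIV_cmult[OF this, of "2 / sqrt pi"] show ?thesis
    by (simp add: erf_def[abs_def])
qed

lemma erf_0 [simp]: "erf 0 = 0"
  by (simp add: erf_def zero_ereal_def)

lemma erf_at_top: "(erf \<longlongrightarrow> 1) at_top"
proof -
  have int: "set_integrable lborel {0..} (\<lambda>x::real. exp (-(x^2)))"
    using gaussian_moment_0 unfolding set_integrable_def by (simp add: has_bochner_integral_iff)
  have val: "(LINT x:{0..}|lborel. exp (-(x^2))) = sqrt pi / 2"
    using gaussian_moment_0 unfolding set_lebesgue_integral_def by (simp add: has_bochner_integral_iff)
  have "((\<lambda>b. LINT x:{0..b}|lborel. exp (-(x^2))) \<longlongrightarrow> sqrt pi / 2) at_top"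
    using tendsto_set_lebesgue_integral_at_top[OF _ int] val by simp
  then have "((\<lambda>b. 2 / sqrt pi * (LINT x:{0..b}|lborel. exp (-(x^2)))) \<longlongrightarrow> 2 / sqrt pi * (sqrt pi / 2)) at_top"
    by (intro tendsto_intros)
  moreover have "eventually (\<lambda>b. 2 / sqrt pi * (LINT x:{0..b}|lborel. exp (-(x^2))) = erf b) at_top"
    using eventually_ge_at_top[of "0::real"]
    by eventually_elim (simp add: erf_def zero_ereal_def interval_integral_Icc)
  ultimately show ?thesis by (auto intro: Lim_transform_eventually)
qed

lemma erf_mono: "a \<le> b \<Longrightarrow> erf a \<le> erf b"
  by (rule DERIV_nonneg_imp_nondecreasing[of a b erf]) (auto intro!: exI erf_deriv)

lemma erf_le_1: "erf s \<le> 1"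
proof (rule tendsto_lowerbound[OF erf_at_top])
  show "eventually (\<lambda>b. erf s \<le> erf b) at_top"
    using eventually_ge_at_top[of s] by eventually_elim (rule erf_mono)
qed simp

lemma erfc_nonneg: "0 \<le> erfc s"
  using erf_le_1[of s] by (simp add: erfc_def)

lemma erfc_le_exp: assumes "0 \<le> s" shows "erfc s \<le> exp (-(s^2))"
proof -
  define h where "h s = exp (-(s^2)) - 1 + erf s" for s
  have hd: "(h has_real_derivative (exp (-(s^2)) * (2 / sqrt pi - 2 * s))) (at s)" for s
    unfolding h_def by (rule derivative_eq_intros erf_deriv refl | simp)+ (simp add: algebra_simps)
  have "0 \<le> h s"
  proof (cases "s \<le> 1 / sqrt pi")
    case True
    have "h 0 \<le> h s"
    proof (rule DERIV_nonneg_imp_nondecreasing[of 0 s h])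
      fix x assume "0 \<le> x" "x \<le> s"
      then have "x \<le> 1 / sqrt pi" using True by simp
      then have "2 * x \<le> 2 / sqrt pi" by simp
      then show "\<exists>y. DERIV h x :> y \<and> 0 \<le> y" using hd by (intro exI conjI) auto
    qed (use assms in auto)
    then show ?thesis by (simp add: h_def)
  next
    case False
    have ht0: "(h \<longlongrightarrow> 0 - 1 + 1) at_top" unfolding h_def
      by (intro tendsto_intros erf_at_top) real_asymp
    have ht: "(h \<longlongrightarrow> 0) at_top" using ht0 by simp
    show ?thesis
    proof (rule tendsto_upperbound[OF ht])
      show "eventually (\<lambda>b. h b \<le> h s) at_top"
        using eventually_ge_at_top[of s]
      proof eventually_elim
        case (elim b)
        show ?case
        proof (rule DERIV_nonpos_imp_nonincreasing[of s b h])
          fix x assume "s \<le> x" "x \<le> b"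
          then have "2 / sqrt pi \<le> 2 * x" using False by simp
          then show "\<exists>y. DERIV h x :> y \<and> y \<le> 0" using hd
            by (intro exI conjI) (auto intro!: mult_nonneg_nonpos)
        qed (use elim in auto)
      qed
    qed simp
  qed
  then show ?thesis by (simp add: h_def erfc_def)
qed


definition Gs :: "real \<Rightarrow> real \<Rightarrow> real" where "Gs t u = exp (- (u^2) / (4 * t))"
definition Hf :: "real \<Rightarrow> real \<Rightarrow> real \<Rightarrow> real \<Rightarrow> real" where
  "Hf M \<epsilon> t u = exp (M * u / sqrt \<epsilon> + M^2 * t / \<epsilon>) * erfc (u / (2 * sqrt t) + M * sqrt t / sqrt \<epsilon>)"

lemma Gs_pos: "Gs t u > 0" by (simp add: Gs_def)

lemma sq_scale: "t > 0 \<Longrightarrow> (u / (2 * sqrt t))^2 = u^2 / (4 * t)"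
  by (simp add: power_divide power_mult_distrib)

lemma gauss_lim:
  fixes u f :: "real \<Rightarrow> real"
  assumes u: "(u \<longlongrightarrow> u0) (at_right 0)" "u0 > 0" and f: "(f \<longlongrightarrow> l) (at_right 0)"
  shows "((\<lambda>t. f t * (1 / sqrt t)^n * Gs t (u t)) \<longlongrightarrow> 0) (at_right 0)"
proof (rule Lim_null_comparison)
  define c where "c = u0^2 / 16"
  have c: "c > 0" using u unfolding c_def by simp
  show "((\<lambda>t. (norm l + 1) * ((1 / sqrt t)^n * exp (- c / t))) \<longlongrightarrow> 0) (at_right 0)"
  proof -
    have "((\<lambda>t::real. (1 / sqrt t)^n * exp (- c / t)) \<longlongrightarrow> 0) (at_right 0)"
      using c by real_asymp
    from tendsto_mult_left[OF this, of "norm l + 1"] show ?thesis by simp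
  qed
  have e1: "eventually (\<lambda>t. u t > u0 / 2) (at_right 0)"
    using order_tendstoD(1)[OF u(1), of "u0/2"] u(2) by simp
  have e2: "eventually (\<lambda>t. norm (f t) \<le> norm l + 1) (at_right 0)"
  proof -
    have "eventually (\<lambda>t. dist (f t) l < 1) (at_right 0)" using tendstoD[OF f, of 1] by simp
    then show ?thesis by eventually_elim (auto simp: dist_real_def abs_if split: if_splits)
  qed
  have e3: "eventually (\<lambda>t. (t::real) > 0) (at_right 0)" by (simp add: eventually_at_right_less)
  show "eventually (\<lambda>t. norm (f t * (1 / sqrt t)^n * Gs t (u t)) \<le> (norm l + 1) * ((1 / sqrt t)^n * exp (- c / t))) (at_right 0)"
    using e1 e2 e3
  proof eventually_elim
    case (elim t)
    have "(u0/2)^2 \<le> (u t)^2" using elim u(2) by (intro power_mono) auto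
    then have "u0^2/16 / t \<le> (u t)^2 / (4 * t)" using elim by (simp add: divide_right_mono field_simps)
    then have "Gs t (u t) \<le> exp (- c / t)" unfolding Gs_def c_def by simp
    then have "norm (Gs t (u t)) \<le> exp (- c / t)" using Gs_pos[of t "u t"] by simp
    moreover have "norm ((1 / sqrt t)^n) = (1 / sqrt t)^n" using elim by simp
    ultimately have "norm ((1 / sqrt t)^n * Gs t (u t)) \<le> (1 / sqrt t)^n * exp (- c / t)"
      by (simp only: norm_mult) (intro mult_left_mono, auto)
    then have "norm (f t) * norm ((1 / sqrt t)^n * Gs t (u t)) \<le> (norm l + 1) * ((1 / sqrt t)^n * exp (- c / t))"
      using elim by (intro mult_mono) auto
    then show ?case by (simp only: norm_mult mult.assoc)
  qed
qed


lemma erfc_Gs: assumes "t > 0" "u \<ge> 0" shows "erfc (u / (2 * sqrt t)) \<le> Gs t u"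
  using erfc_le_exp[of "u / (2 * sqrt t)"] assms by (simp add: Gs_def sq_scale)

lemma ev_pos: "eventually (\<lambda>t. (t::real) > 0) (at_right 0)" by (simp add: eventually_at_right_less)

lemma erfc_lim:
  assumes u: "(u \<longlongrightarrow> u0) (at_right 0)" "u0 > 0"
  shows "((\<lambda>t. erfc (u t / (2 * sqrt t))) \<longlongrightarrow> 0) (at_right 0)"
proof (rule Lim_null_comparison)
  show "((\<lambda>t. 1 * (1 / sqrt t)^0 * Gs t (u t)) \<longlongrightarrow> 0) (at_right 0)"
    by (rule gauss_lim[OF u tendsto_const])
  have e1: "eventually (\<lambda>t. u t > 0) (at_right 0)"
    using order_tendstoD(1)[OF u(1), of 0] u(2) by simp
  show "eventually (\<lambda>t. norm (erfc (u t / (2 * sqrt t))) \<le> 1 * (1 / sqrt t)^0 * Gs t (u t)) (at_right 0)"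
    using e1 ev_pos by eventually_elim (use erfc_nonneg erfc_Gs in auto)
qed

lemma erf_lim:
  assumes u: "(u \<longlongrightarrow> u0) (at_right 0)" "u0 > 0"
  shows "((\<lambda>t. erf (u t / (2 * sqrt t))) \<longlongrightarrow> 1) (at_right 0)"
proof -
  have "((\<lambda>t. 1 - erfc (u t / (2 * sqrt t))) \<longlongrightarrow> 1 - 0) (at_right 0)"
    by (intro tendsto_intros erfc_lim[OF u])
  then show ?thesis by (simp add: erfc_def)
qed

lemma Hf_exp_identity:
  assumes "t > 0" "\<epsilon> > 0"
  shows "M * u / sqrt \<epsilon> + M^2 * t / \<epsilon> - (u / (2 * sqrt t) + M * sqrt t / sqrt \<epsilon>)^2 = - (u^2) / (4 * t)"
proof -
  define a where "a = sqrt t"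
  define b where "b = sqrt \<epsilon>"
  have a: "a > 0" "t = a^2" using assms unfolding a_def by auto
  have b: "b > 0" "\<epsilon> = b^2" using assms unfolding b_def by auto
  show ?thesis unfolding a_def[symmetric] b_def[symmetric] a(2) b(2)
    using a(1) b(1) by (simp add: field_simps power2_eq_square)
qed

lemma Hf_bounds:
  assumes "t > 0" "\<epsilon> > 0" "M > 0" "u \<ge> 0"
  shows "0 \<le> Hf M \<epsilon> t u" "Hf M \<epsilon> t u \<le> Gs t u"
proof -
  show "0 \<le> Hf M \<epsilon> t u" unfolding Hf_def using erfc_nonneg by simp
  have s0: "0 \<le> u / (2 * sqrt t) + M * sqrt t / sqrt \<epsilon>" using assms by simp
  have "Hf M \<epsilon> t u \<le> exp (M * u / sqrt \<epsilon> + M^2 * t / \<epsilon>) * exp (- ((u / (2 * sqrt t) + M * sqrt t / sqrt \<epsilon>)^2))"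
    unfolding Hf_def by (intro mult_left_mono erfc_le_exp s0) simp
  also have "\<dots> = Gs t u"
    unfolding Gs_def using Hf_exp_identity[OF assms(1,2), of M u] by (simp flip: exp_add)
  finally show "Hf M \<epsilon> t u \<le> Gs t u" .
qed

lemma Hf_lim:
  assumes u: "(u \<longlongrightarrow> u0) (at_right 0)" "u0 > 0" and "\<epsilon> > 0" "M > 0"
  shows "((\<lambda>t. Hf M \<epsilon> t (u t)) \<longlongrightarrow> 0) (at_right 0)"
proof (rule Lim_null_comparison)
  show "((\<lambda>t. 1 * (1 / sqrt t)^0 * Gs t (u t)) \<longlongrightarrow> 0) (at_right 0)"
    by (rule gauss_lim[OF u tendsto_const])
  have e1: "eventually (\<lambda>t. u t > 0) (at_right 0)"
    using order_tendstoD(1)[OF u(1), of 0] u(2) by simp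
  show "eventually (\<lambda>t. norm (Hf M \<epsilon> t (u t)) \<le> 1 * (1 / sqrt t)^0 * Gs t (u t)) (at_right 0)"
    using e1 ev_pos by eventually_elim (use Hf_bounds assms in auto)
qed

lemma lin_d: "((\<lambda>u. u / c + d) has_real_derivative 1 / c) (at u)" for c d :: real
  using DERIV_add[OF DERIV_cdivide[OF DERIV_ident, where c=c] DERIV_const[of d]] by simp

lemma lin_d0: "((\<lambda>u. u / c) has_real_derivative 1 / c) (at u)" for c :: real
  using DERIV_cdivide[OF DERIV_ident, where c=c] by simp

lemma D_erf_sc:
  assumes "t > 0"
  shows "((\<lambda>u. erf (u / (2 * sqrt t))) has_real_derivative Gs t u / (sqrt pi * sqrt t)) (at u)"
proof -
  have "((\<lambda>u. erf (u / (2 * sqrt t))) has_real_derivative (2 / sqrt pi * exp (- ((u / (2 * sqrt t))^2))) * (1 / (2 * sqrt t))) (at u)"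
    by (rule DERIV_chain2[OF erf_deriv lin_d0])
  then show ?thesis using assms by (simp add: Gs_def sq_scale field_simps)
qed

lemma D_Gs:
  assumes "t > 0"
  shows "((\<lambda>u. Gs t u) has_real_derivative (- (u / (2 * t)) * Gs t u)) (at u)"
  unfolding Gs_def using assms
  by (auto intro!: derivative_eq_intros simp: field_simps power2_eq_square)

lemma D_Hf:
  assumes "t > 0" "\<epsilon> > 0"
  shows "((\<lambda>u. Hf M \<epsilon> t u) has_real_derivative (M / sqrt \<epsilon> * Hf M \<epsilon> t u - Gs t u / (sqrt pi * sqrt t))) (at u)"
proof -
  define s where "s u = u / (2 * sqrt t) + M * sqrt t / sqrt \<epsilon>" for u
  have ds: "(s has_real_derivative 1 / (2 * sqrt t)) (at u)" for u
    unfolding s_def by (rule lin_d)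
  have de: "((\<lambda>u. erfc (s u)) has_real_derivative - (2 / sqrt pi * exp (- ((s u)^2))) * (1 / (2 * sqrt t))) (at u)"
    unfolding erfc_def by (auto intro!: derivative_eq_intros DERIV_chain2[OF erf_deriv ds])
  have "((\<lambda>u. exp (M * u / sqrt \<epsilon> + M^2 * t / \<epsilon>) * erfc (s u)) has_real_derivative
      (exp (M * u / sqrt \<epsilon> + M^2 * t / \<epsilon>) * (M / sqrt \<epsilon>)) * erfc (s u) +
      (- (2 / sqrt pi * exp (- ((s u)^2))) * (1 / (2 * sqrt t))) * exp (M * u / sqrt \<epsilon> + M^2 * t / \<epsilon>)) (at u)"
  proof (intro DERIV_mult de)
    have "((\<lambda>u. M * u / sqrt \<epsilon> + M^2 * t / \<epsilon>) has_real_derivative M * 1 / sqrt \<epsilon> + 0) (at u)"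
      by (intro DERIV_add DERIV_cdivide DERIV_cmult DERIV_ident DERIV_const)
    from DERIV_chain2[OF DERIV_exp this]
    show "((\<lambda>u. exp (M * u / sqrt \<epsilon> + M^2 * t / \<epsilon>)) has_real_derivative exp (M * u / sqrt \<epsilon> + M^2 * t / \<epsilon>) * (M / sqrt \<epsilon>)) (at u)"
      by simp
  qed
  moreover have "exp (M * u / sqrt \<epsilon> + M^2 * t / \<epsilon>) * exp (- ((s u)^2)) = Gs t u"
    unfolding Gs_def s_def using Hf_exp_identity[OF assms, of M u] by (simp flip: exp_add)
  ultimately show ?thesis unfolding Hf_def s_def[symmetric] using assms
    by (simp add: field_simps)
qed


definition "W0d1 M Y V \<epsilon> u t = (cM V - cP Y)/2 * (M / sqrt \<epsilon> * Hf M \<epsilon> t u - 2 * (Gs t u / (sqrt pi * sqrt t)))"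
definition "W0d2 M Y V \<epsilon> u t = (cM V - cP Y)/2 * ((M / sqrt \<epsilon>)^2 * Hf M \<epsilon> t u - (M / sqrt \<epsilon>) * (Gs t u / (sqrt pi * sqrt t))
   + (u / t) * (Gs t u / (sqrt pi * sqrt t)))"
definition "W0d3 M Y V \<epsilon> u t = (cM V - cP Y)/2 * ((M / sqrt \<epsilon>)^3 * Hf M \<epsilon> t u - (M / sqrt \<epsilon>)^2 * (Gs t u / (sqrt pi * sqrt t))
   + (M / sqrt \<epsilon>) * (u / (2 * t)) * (Gs t u / (sqrt pi * sqrt t)) + (1 / t) * (Gs t u / (sqrt pi * sqrt t))
   - (u^2 / (2 * t^2)) * (Gs t u / (sqrt pi * sqrt t)))"
definition "W12d1 M Y V u t = (dP Y - dM M V) / 2 * erf (u / (2 * sqrt t)) + (dP Y + dM M V) / 2"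
definition "W12d2 M Y V u t = (dP Y - dM M V) / 2 * (Gs t u / (sqrt pi * sqrt t))"
definition "W1d1 M Y V u t = u * ((eP Y - eM M V) / 2 * erf (u / (2 * sqrt t)) + (eP Y + eM M V) / 2)
   + 2 * ((eP Y - eM M V) / 2) * t * (Gs t u / (sqrt pi * sqrt t))"

lemma sqrt_t_pi: "t > 0 \<Longrightarrow> sqrt (t / pi) = t / (sqrt pi * sqrt t)"
proof -
  assume t: "t > 0"
  have "sqrt (t / pi) = sqrt t / sqrt pi" by (simp add: real_sqrt_divide)
  also have "\<dots> = t / (sqrt pi * sqrt t)" using t by (simp add: field_simps)
  finally show ?thesis .
qed

lemma D_Gq:
  assumes "t > 0"
  shows "((\<lambda>u. Gs t u / (sqrt pi * sqrt t)) has_real_derivative (- (u / (2 * t)) * (Gs t u / (sqrt pi * sqrt t)))) (at u)"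
  using DERIV_cdivide[OF D_Gs[OF assms], where c="sqrt pi * sqrt t"] by simp

lemma D_W0e:
  assumes "t > 0" "\<epsilon> > 0"
  shows "((\<lambda>u. W0e M Y V \<epsilon> u t) has_real_derivative W0d1 M Y V \<epsilon> u t) (at u)"
proof -
  have e: "(\<lambda>u. W0e M Y V \<epsilon> u t) = (\<lambda>u. cP Y + (cM V - cP Y)/2 * (1 - erf (u / (2 * sqrt t))) + (cM V - cP Y)/2 * Hf M \<epsilon> t u)"
    by (rule ext) (simp add: W0e_def W0_def U0_def erfc_def Hf_def mult.assoc)
  have "((\<lambda>u. cP Y + (cM V - cP Y)/2 * (1 - erf (u / (2 * sqrt t))) + (cM V - cP Y)/2 * Hf M \<epsilon> t u) has_real_derivative
     (0 + (cM V - cP Y)/2 * (0 - Gs t u / (sqrt pi * sqrt t)) + (cM V - cP Y)/2 * (M / sqrt \<epsilon> * Hf M \<epsilon> t u - Gs t u / (sqrt pi * sqrt t)))) (at u)"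
    by (intro DERIV_add DERIV_cmult DERIV_diff DERIV_const D_erf_sc D_Hf assms)
  then show ?thesis unfolding e W0d1_def by (rule DERIV_cong) (use assms in \<open>simp add: field_simps\<close>)
qed

lemma D_W0d1:
  assumes "t > 0" "\<epsilon> > 0"
  shows "((\<lambda>u. W0d1 M Y V \<epsilon> u t) has_real_derivative W0d2 M Y V \<epsilon> u t) (at u)"
proof -
  have "((\<lambda>u. (cM V - cP Y)/2 * (M / sqrt \<epsilon> * Hf M \<epsilon> t u - 2 * (Gs t u / (sqrt pi * sqrt t)))) has_real_derivative
     (cM V - cP Y)/2 * (M / sqrt \<epsilon> * (M / sqrt \<epsilon> * Hf M \<epsilon> t u - Gs t u / (sqrt pi * sqrt t)) - 2 * (- (u / (2 * t)) * (Gs t u / (sqrt pi * sqrt t))))) (at u)"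
    by (intro DERIV_add DERIV_cmult DERIV_diff DERIV_const D_Gq D_Hf assms)
  then show ?thesis unfolding W0d1_def[abs_def] W0d2_def using assms by (simp add: algebra_simps power2_eq_square)
qed

lemma D_W0d2:
  assumes "t > 0" "\<epsilon> > 0"
  shows "((\<lambda>u. W0d2 M Y V \<epsilon> u t) has_real_derivative W0d3 M Y V \<epsilon> u t) (at u)"
proof -
  have "((\<lambda>u. (cM V - cP Y)/2 * ((M / sqrt \<epsilon>)^2 * Hf M \<epsilon> t u - (M / sqrt \<epsilon>) * (Gs t u / (sqrt pi * sqrt t))
   + (u / t) * (Gs t u / (sqrt pi * sqrt t)))) has_real_derivative
     (cM V - cP Y)/2 * ((M / sqrt \<epsilon>)^2 * (M / sqrt \<epsilon> * Hf M \<epsilon> t u - Gs t u / (sqrt pi * sqrt t))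
       - (M / sqrt \<epsilon>) * (- (u / (2 * t)) * (Gs t u / (sqrt pi * sqrt t)))
       + (1 / t * (Gs t u / (sqrt pi * sqrt t)) + (- (u / (2 * t)) * (Gs t u / (sqrt pi * sqrt t))) * (u / t)))) (at u)"
    by (intro DERIV_add DERIV_cmult DERIV_diff DERIV_const D_Gq D_Hf assms DERIV_mult lin_d0)
  then show ?thesis unfolding W0d2_def[abs_def] W0d3_def using assms by (simp add: algebra_simps power2_eq_square power3_eq_cube)
qed

lemma D_W12:
  assumes "t > 0"
  shows "((\<lambda>u. W12 M Y V u t) has_real_derivative W12d1 M Y V u t) (at u)"
proof -
  have e: "(\<lambda>u. W12 M Y V u t) = (\<lambda>u. u * ((dP Y - dM M V) / 2 * erf (u / (2 * sqrt t)) + (dP Y + dM M V) / 2)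
      + (dP Y - dM M V) * t * (Gs t u / (sqrt pi * sqrt t)))"
    by (rule ext) (simp add: W12_def Gs_def sqrt_t_pi assms)
  have "((\<lambda>u. u * ((dP Y - dM M V) / 2 * erf (u / (2 * sqrt t)) + (dP Y + dM M V) / 2)
      + (dP Y - dM M V) * t * (Gs t u / (sqrt pi * sqrt t))) has_real_derivative
     (1 * ((dP Y - dM M V) / 2 * erf (u / (2 * sqrt t)) + (dP Y + dM M V) / 2) + ((dP Y - dM M V) / 2 * (Gs t u / (sqrt pi * sqrt t)) + 0) * u
      + (dP Y - dM M V) * t * (- (u / (2 * t)) * (Gs t u / (sqrt pi * sqrt t))))) (at u)"
    by (intro DERIV_add DERIV_cmult DERIV_const D_Gq D_erf_sc assms DERIV_mult DERIV_ident)
  then show ?thesis unfolding e W12d1_def by (rule DERIV_cong) (use assms in \<open>simp add: field_simps\<close>)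
qed

lemma D_W12d1:
  assumes "t > 0"
  shows "((\<lambda>u. W12d1 M Y V u t) has_real_derivative W12d2 M Y V u t) (at u)"
  unfolding W12d1_def W12d2_def
  by (rule DERIV_cong[OF DERIV_add[OF DERIV_cmult[OF D_erf_sc[OF assms]] DERIV_const]]) simp

lemma D_W1:
  assumes "t > 0"
  shows "((\<lambda>u. W1 M Y V u t) has_real_derivative W1d1 M Y V u t) (at u)"
proof -
  have e: "(\<lambda>u. W1 M Y V u t) = (\<lambda>u. (u^2 / 2 + t) * ((eP Y - eM M V) / 2 * erf (u / (2 * sqrt t)) + (eP Y + eM M V) / 2)
      + (eP Y - eM M V) / 2 * t * (u * (Gs t u / (sqrt pi * sqrt t))))"
    by (rule ext) (simp add: W1_def Gs_def sqrt_t_pi assms)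
  have "((\<lambda>u. (u^2 / 2 + t) * ((eP Y - eM M V) / 2 * erf (u / (2 * sqrt t)) + (eP Y + eM M V) / 2)
      + (eP Y - eM M V) / 2 * t * (u * (Gs t u / (sqrt pi * sqrt t)))) has_real_derivative
     ((2 * u / 2 + 0) * ((eP Y - eM M V) / 2 * erf (u / (2 * sqrt t)) + (eP Y + eM M V) / 2) + ((eP Y - eM M V) / 2 * (Gs t u / (sqrt pi * sqrt t)) + 0) * (u^2 / 2 + t)
      + (eP Y - eM M V) / 2 * t * (1 * (Gs t u / (sqrt pi * sqrt t)) + (- (u / (2 * t)) * (Gs t u / (sqrt pi * sqrt t))) * u))) (at u)"
  proof (intro DERIV_add DERIV_cmult DERIV_const D_Gq D_erf_sc assms DERIV_mult DERIV_ident)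
    show "((\<lambda>u. u^2 / 2) has_real_derivative 2 * u / 2) (at u)"
      by (auto intro!: derivative_eq_intros)
  qed
  then show ?thesis unfolding e W1d1_def by (rule DERIV_cong) (use assms in \<open>simp add: field_simps power2_eq_square\<close>)
qed

lemma deriv_W0e: "t > 0 \<Longrightarrow> \<epsilon> > 0 \<Longrightarrow> deriv (\<lambda>u. W0e M Y V \<epsilon> u t) = (\<lambda>u. W0d1 M Y V \<epsilon> u t)"
  by (rule ext, rule DERIV_imp_deriv, rule D_W0e)
lemma deriv_W0d1: "t > 0 \<Longrightarrow> \<epsilon> > 0 \<Longrightarrow> deriv (\<lambda>u. W0d1 M Y V \<epsilon> u t) = (\<lambda>u. W0d2 M Y V \<epsilon> u t)"
  by (rule ext, rule DERIV_imp_deriv, rule D_W0d1)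
lemma deriv_W0d2: "t > 0 \<Longrightarrow> \<epsilon> > 0 \<Longrightarrow> deriv (\<lambda>u. W0d2 M Y V \<epsilon> u t) = (\<lambda>u. W0d3 M Y V \<epsilon> u t)"
  by (rule ext, rule DERIV_imp_deriv, rule D_W0d2)
lemma deriv_W12: "t > 0 \<Longrightarrow> deriv (\<lambda>u. W12 M Y V u t) = (\<lambda>u. W12d1 M Y V u t)"
  by (rule ext, rule DERIV_imp_deriv, rule D_W12)
lemma deriv_W12d1: "t > 0 \<Longrightarrow> deriv (\<lambda>u. W12d1 M Y V u t) = (\<lambda>u. W12d2 M Y V u t)"
  by (rule ext, rule DERIV_imp_deriv, rule D_W12d1)
lemma deriv_W1: "t > 0 \<Longrightarrow> deriv (\<lambda>u. W1 M Y V u t) = (\<lambda>u. W1d1 M Y V u t)"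
  by (rule ext, rule DERIV_imp_deriv, rule D_W1)


lemma sqrt_pi_nz [simp]: "sqrt pi \<noteq> 0"
proof -
  have "0 < sqrt pi" using pi_gt_zero by (rule real_sqrt_gt_zero)
  then show ?thesis by simp
qed

lemma gl:
  assumes u: "(u \<longlongrightarrow> u0) (at_right 0)" "u0 > 0" and f: "(f \<longlongrightarrow> l) (at_right 0)"
    and e: "eventually (\<lambda>t. g t = f t * (1 / sqrt t)^n * Gs t (u t)) (at_right 0)"
  shows "(g \<longlongrightarrow> 0) (at_right 0)"
proof -
  have "((\<lambda>t. f t * (1 / sqrt t)^n * Gs t (u t)) \<longlongrightarrow> 0) (at_right 0)" by (rule gauss_lim[OF u f])
  then show ?thesis by (rule Lim_transform_eventually) (use e in \<open>auto elim: eventually_mono\<close>)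
qed

context
  fixes u :: "real \<Rightarrow> real" and u0 M \<epsilon> :: real and Y V :: "nat \<Rightarrow> real \<Rightarrow> real"
  assumes u: "(u \<longlongrightarrow> u0) (at_right 0)" "u0 > 0" and M: "M > 0" and ep: "\<epsilon> > 0"
begin

lemma Gs_lim: "((\<lambda>t. Gs t (u t)) \<longlongrightarrow> 0) (at_right 0)"
  by (rule gl[OF u tendsto_const[of 1], where n=0]) simp

lemma Gq_lim: "((\<lambda>t. Gs t (u t) / (sqrt pi * sqrt t)) \<longlongrightarrow> 0) (at_right 0)"
  by (rule gl[OF u tendsto_const[of "1 / sqrt pi"], where n=1]) (use ev_pos in \<open>auto elim!: eventually_mono simp: pi_gt_zero\<close>)

lemma tGq_lim: "((\<lambda>t. t * (Gs t (u t) / (sqrt pi * sqrt t))) \<longlongrightarrow> 0) (at_right 0)"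
proof (rule gl[OF u _, where n=0])
  show "((\<lambda>t. sqrt t / sqrt pi) \<longlongrightarrow> sqrt 0 / sqrt pi) (at_right 0)"
    by (intro tendsto_intros) simp_all
  show "\<forall>\<^sub>F t in at_right 0. t * (Gs t (u t) / (sqrt pi * sqrt t)) = sqrt t / sqrt pi * (1 / sqrt t) ^ 0 * Gs t (u t)"
    using ev_pos
  proof eventually_elim
    case (elim t)
    have sp: "sqrt t > 0" using elim by simp
    have "(sqrt t)^2 * (Gs t (u t) / (sqrt pi * sqrt t)) = sqrt t / sqrt pi * (1 / sqrt t) ^ 0 * Gs t (u t)"
      using sp by (simp add: field_simps power2_eq_square)
    then show ?case using elim by simp
  qed
qed

lemma pow_sqrt: "t \<ge> 0 \<Longrightarrow> sqrt t ^ 3 = t * sqrt t" "t \<ge> 0 \<Longrightarrow> sqrt t ^ 5 = t^2 * sqrt t"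
proof -
  assume t: "t \<ge> 0"
  have "sqrt t ^ 3 = sqrt t ^ 2 * sqrt t" by (simp add: eval_nat_numeral)
  then show "sqrt t ^ 3 = t * sqrt t" by (simp only: real_sqrt_pow2[OF t])
  have e: "sqrt t ^ 2 = t" using t by simp
  have "sqrt t ^ 5 = (sqrt t ^ 2)^2 * sqrt t" by algebra
  also have "\<dots> = t^2 * sqrt t" by (simp only: e)
  finally show "sqrt t ^ 5 = t^2 * sqrt t" .
qed

lemma uGq_lim: "((\<lambda>t. (u t / t) * (Gs t (u t) / (sqrt pi * sqrt t))) \<longlongrightarrow> 0) (at_right 0)"
  by (rule gl[OF u tendsto_mult[OF u(1) tendsto_const[of "1 / sqrt pi"]], where n=3])
     (use ev_pos in \<open>auto elim!: eventually_mono simp: pow_sqrt field_simps\<close>)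

lemma uGq2_lim: "((\<lambda>t. (u t / (2 * t)) * (Gs t (u t) / (sqrt pi * sqrt t))) \<longlongrightarrow> 0) (at_right 0)"
  by (rule gl[OF u tendsto_mult[OF u(1) tendsto_const[of "1 / (2 * sqrt pi)"]], where n=3])
     (use ev_pos in \<open>auto elim!: eventually_mono simp: pow_sqrt field_simps\<close>)

lemma iGq_lim: "((\<lambda>t. (1 / t) * (Gs t (u t) / (sqrt pi * sqrt t))) \<longlongrightarrow> 0) (at_right 0)"
  by (rule gl[OF u tendsto_const[of "1 / sqrt pi"], where n=3])
     (use ev_pos in \<open>auto elim!: eventually_mono simp: pow_sqrt field_simps\<close>)

lemma u2Gq_lim: "((\<lambda>t. ((u t)^2 / (2 * t^2)) * (Gs t (u t) / (sqrt pi * sqrt t))) \<longlongrightarrow> 0) (at_right 0)"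
  by (rule gl[OF u tendsto_mult[OF tendsto_power[OF u(1), of 2] tendsto_const[of "1 / (2 * sqrt pi)"]], where n=5])
     (use ev_pos in \<open>auto elim!: eventually_mono simp: pow_sqrt field_simps\<close>)

lemma Hfu_lim: "((\<lambda>t. Hf M \<epsilon> t (u t)) \<longlongrightarrow> 0) (at_right 0)"
  by (rule Hf_lim[OF u ep M])

lemma erfu_lim: "((\<lambda>t. erf (u t / (2 * sqrt t))) \<longlongrightarrow> 1) (at_right 0)"
  by (rule erf_lim[OF u])

lemma erfcu_lim: "((\<lambda>t. erfc (u t / (2 * sqrt t))) \<longlongrightarrow> 0) (at_right 0)"
  by (rule erfc_lim[OF u])

lemma W0e_lim: "((\<lambda>t. W0e M Y V \<epsilon> (u t) t) \<longlongrightarrow> cP Y) (at_right 0)"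
proof -
  have "((\<lambda>t. cP Y + (cM V - cP Y)/2 * erfc (u t / (2 * sqrt t)) + (cM V - cP Y)/2 * Hf M \<epsilon> t (u t)) \<longlongrightarrow>
      cP Y + (cM V - cP Y)/2 * 0 + (cM V - cP Y)/2 * 0) (at_right 0)"
    by (intro tendsto_intros erfcu_lim Hfu_lim)
  then show ?thesis by (simp add: W0e_def W0_def U0_def Hf_def mult.assoc)
qed

lemma W0d1_lim: "((\<lambda>t. W0d1 M Y V \<epsilon> (u t) t) \<longlongrightarrow> 0) (at_right 0)"
proof -
  have "((\<lambda>t. W0d1 M Y V \<epsilon> (u t) t) \<longlongrightarrow> (cM V - cP Y)/2 * (M / sqrt \<epsilon> * 0 - 2 * 0)) (at_right 0)"
    unfolding W0d1_def by (intro tendsto_intros Hfu_lim Gq_lim)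
  then show ?thesis by simp
qed

lemma W0d2_lim: "((\<lambda>t. W0d2 M Y V \<epsilon> (u t) t) \<longlongrightarrow> 0) (at_right 0)"
proof -
  have "((\<lambda>t. W0d2 M Y V \<epsilon> (u t) t) \<longlongrightarrow> (cM V - cP Y)/2 * ((M / sqrt \<epsilon>)^2 * 0 - (M / sqrt \<epsilon>) * 0 + 0)) (at_right 0)"
    unfolding W0d2_def by (intro tendsto_intros Hfu_lim Gq_lim uGq_lim)
  then show ?thesis by simp
qed

lemma W0d3_lim: "((\<lambda>t. W0d3 M Y V \<epsilon> (u t) t) \<longlongrightarrow> 0) (at_right 0)"
proof -
  have a: "((\<lambda>t. (M / sqrt \<epsilon>) * (u t / (2 * t)) * (Gs t (u t) / (sqrt pi * sqrt t))) \<longlongrightarrow> (M / sqrt \<epsilon>) * 0) (at_right 0)"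
    using tendsto_mult[OF tendsto_const[of "M / sqrt \<epsilon>"] uGq2_lim] by (simp add: mult.assoc)
  have "((\<lambda>t. W0d3 M Y V \<epsilon> (u t) t) \<longlongrightarrow> (cM V - cP Y)/2 * ((M / sqrt \<epsilon>)^3 * 0 - (M / sqrt \<epsilon>)^2 * 0 + (M / sqrt \<epsilon>) * 0 + 0 - 0)) (at_right 0)"
    unfolding W0d3_def by (intro tendsto_intros Hfu_lim Gq_lim a iGq_lim u2Gq_lim)
  then show ?thesis by simp
qed

lemma W12_lim: "((\<lambda>t. W12 M Y V (u t) t) \<longlongrightarrow> u0 * dP Y) (at_right 0)"
proof -
  have "((\<lambda>t. u t * ((dP Y - dM M V) / 2 * erf (u t / (2 * sqrt t)) + (dP Y + dM M V) / 2) + (dP Y - dM M V) * sqrt (t / pi) * Gs t (u t))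
     \<longlongrightarrow> u0 * ((dP Y - dM M V) / 2 * 1 + (dP Y + dM M V) / 2) + (dP Y - dM M V) * sqrt (0 / pi) * 0) (at_right 0)"
    by (intro tendsto_intros u(1) erfu_lim Gs_lim) simp_all
  moreover have "u0 * ((dP Y - dM M V) / 2 * 1 + (dP Y + dM M V) / 2) + (dP Y - dM M V) * sqrt (0 / pi) * 0 = u0 * dP Y"
    by (simp add: field_simps)
  moreover have "(\<lambda>t. u t * ((dP Y - dM M V) / 2 * erf (u t / (2 * sqrt t)) + (dP Y + dM M V) / 2) + (dP Y - dM M V) * sqrt (t / pi) * Gs t (u t))
    = (\<lambda>t. W12 M Y V (u t) t)" by (simp add: W12_def Gs_def)
  ultimately show ?thesis by (metis (no_types, lifting))
qed

lemma W12d1_lim: "((\<lambda>t. W12d1 M Y V (u t) t) \<longlongrightarrow> dP Y) (at_right 0)"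
proof -
  have "((\<lambda>t. W12d1 M Y V (u t) t) \<longlongrightarrow> (dP Y - dM M V) / 2 * 1 + (dP Y + dM M V) / 2) (at_right 0)"
    unfolding W12d1_def by (intro tendsto_intros erfu_lim)
  moreover have "(dP Y - dM M V) / 2 * 1 + (dP Y + dM M V) / 2 = dP Y" by (simp add: field_simps)
  ultimately show ?thesis by (metis (no_types, lifting))
qed

lemma W12d2_lim: "((\<lambda>t. W12d2 M Y V (u t) t) \<longlongrightarrow> 0) (at_right 0)"
proof -
  have "((\<lambda>t. W12d2 M Y V (u t) t) \<longlongrightarrow> (dP Y - dM M V) / 2 * 0) (at_right 0)"
    unfolding W12d2_def by (intro tendsto_intros Gq_lim)
  then show ?thesis by simp
qed

lemma W1_lim: "((\<lambda>t. W1 M Y V (u t) t) \<longlongrightarrow> u0^2 / 2 * eP Y) (at_right 0)"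
proof -
  have "((\<lambda>t. ((u t)^2 / 2 + t) * ((eP Y - eM M V) / 2 * erf (u t / (2 * sqrt t)) + (eP Y + eM M V) / 2)
          + (eP Y - eM M V) / 2 * u t * sqrt (t / pi) * Gs t (u t))
     \<longlongrightarrow> (u0^2 / 2 + 0) * ((eP Y - eM M V) / 2 * 1 + (eP Y + eM M V) / 2) + (eP Y - eM M V) / 2 * u0 * sqrt (0 / pi) * 0) (at_right 0)"
    by (intro tendsto_intros u(1) erfu_lim Gs_lim) simp_all
  moreover have "(u0^2 / 2 + 0) * ((eP Y - eM M V) / 2 * 1 + (eP Y + eM M V) / 2) + (eP Y - eM M V) / 2 * u0 * sqrt (0 / pi) * 0 = u0^2 / 2 * eP Y"
    by (simp add: field_simps)
  moreover have "(\<lambda>t. ((u t)^2 / 2 + t) * ((eP Y - eM M V) / 2 * erf (u t / (2 * sqrt t)) + (eP Y + eM M V) / 2)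
          + (eP Y - eM M V) / 2 * u t * sqrt (t / pi) * Gs t (u t)) = (\<lambda>t. W1 M Y V (u t) t)"
    by (simp add: W1_def Gs_def)
  ultimately show ?thesis by (metis (no_types, lifting))
qed

lemma W1d1_lim: "((\<lambda>t. W1d1 M Y V (u t) t) \<longlongrightarrow> u0 * eP Y) (at_right 0)"
proof -
  have a: "((\<lambda>t. 2 * ((eP Y - eM M V) / 2) * t * (Gs t (u t) / (sqrt pi * sqrt t))) \<longlongrightarrow> 2 * ((eP Y - eM M V) / 2) * 0) (at_right 0)"
    using tendsto_mult[OF tendsto_const[of "2 * ((eP Y - eM M V) / 2)"] tGq_lim] by (simp add: mult.assoc)
  have "((\<lambda>t. W1d1 M Y V (u t) t) \<longlongrightarrow> u0 * ((eP Y - eM M V) / 2 * 1 + (eP Y + eM M V) / 2) + 2 * ((eP Y - eM M V) / 2) * 0) (at_right 0)"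
    unfolding W1d1_def by (intro tendsto_intros u(1) erfu_lim a)
  moreover have "u0 * ((eP Y - eM M V) / 2 * 1 + (eP Y + eM M V) / 2) + 2 * ((eP Y - eM M V) / 2) * 0 = u0 * eP Y"
    by (simp add: field_simps)
  ultimately show ?thesis by (metis (no_types, lifting))
qed

lemma W32_lim: "((\<lambda>t. W32 M Y V (u t) t) \<longlongrightarrow> hP Y * u0^3) (at_right 0)"
proof -
  have "((\<lambda>t. ((u t)^3 / 2 + 3 * t * u t) * ((hP Y - hM M V) * erf (u t / (2 * sqrt t)) + hP Y + hM M V)
      + (hP Y - hM M V) * (4 * t + (u t)^2) * sqrt (t / pi) * Gs t (u t)
      - fM M V * sqrt (t / pi) * Gs t (u t)
      + fM M V / 2 * u t * erfc (u t / (2 * sqrt t)))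
     \<longlongrightarrow> (u0^3 / 2 + 3 * 0 * u0) * ((hP Y - hM M V) * 1 + hP Y + hM M V)
      + (hP Y - hM M V) * (4 * 0 + u0^2) * sqrt (0 / pi) * 0
      - fM M V * sqrt (0 / pi) * 0
      + fM M V / 2 * u0 * 0) (at_right 0)"
    by (intro tendsto_intros u(1) erfu_lim Gs_lim erfcu_lim) simp_all
  moreover have "(u0^3 / 2 + 3 * 0 * u0) * ((hP Y - hM M V) * 1 + hP Y + hM M V)
      + (hP Y - hM M V) * (4 * 0 + u0^2) * sqrt (0 / pi) * 0
      - fM M V * sqrt (0 / pi) * 0
      + fM M V / 2 * u0 * 0 = hP Y * u0^3" by (simp add: field_simps)
  moreover have "(\<lambda>t. ((u t)^3 / 2 + 3 * t * u t) * ((hP Y - hM M V) * erf (u t / (2 * sqrt t)) + hP Y + hM M V)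
      + (hP Y - hM M V) * (4 * t + (u t)^2) * sqrt (t / pi) * Gs t (u t)
      - fM M V * sqrt (t / pi) * Gs t (u t)
      + fM M V / 2 * u t * erfc (u t / (2 * sqrt t))) = (\<lambda>t. W32 M Y V (u t) t)"
    by (simp add: W32_def Gs_def)
  ultimately show ?thesis by (metis (no_types, lifting))
qed

end


lemma Y_lim:
  assumes Y: "C4_on {0..1} Y" and k: "k < 4" and p: "0 < p" "p \<le> 1" and M: "M > 0"
  shows "((\<lambda>t. Y k (p - M * t)) \<longlongrightarrow> Y k p) (at_right 0)"
proof -
  have "(Y k has_real_derivative Y (Suc k) p) (at p within {0..1})"
    using Y k p unfolding C4_on_def by auto
  then have c: "continuous (at p within {0..1}) (Y k)" by (rule DERIV_continuous)
  have "eventually (\<lambda>t. t < p / M) (at_right (0::real))"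
    unfolding eventually_at_right_field using p M by (intro exI[of _ "p/M"]) auto
  then have e: "eventually (\<lambda>t. p - M * t \<in> {0..1}) (at_right 0)"
    using ev_pos
  proof eventually_elim
    case (elim t)
    then have "M * t < p" using M by (simp add: field_simps)
    moreover have "0 \<le> M * t" using elim M by simp
    ultimately show ?case using p by auto
  qed
  have "((\<lambda>t. p - M * t) \<longlongrightarrow> p - M * 0) (at_right 0)" by (intro tendsto_intros)
  then have l: "((\<lambda>t. p - M * t) \<longlongrightarrow> p) (at_right 0)" by simp
  show ?thesis by (rule continuous_within_tendsto_compose[OF c e l])
qed

lemma Ptil_lim:
  assumes M: "M > 0" and ep: "\<epsilon> > 0" and Y: "C4_on {0..1} Y" and x: "0 < x" "x < 1"
  shows "((\<lambda>t. Ptil M Y V \<epsilon> x t) \<longlongrightarrow> Y 0 x - exp (- M * ((1 - x) / \<epsilon>)) * (Y 0 1 + (1 - x) * Y 1 1)) (at_right 0)"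
proof -
  define w where "w t = (x - M * t) / sqrt \<epsilon>" for t
  define m where "m t = M * ((1 / M - t) / sqrt \<epsilon>)" for t
  define z where "z = (1 - x) / \<epsilon>"
  have wl: "(w \<longlongrightarrow> x / sqrt \<epsilon>) (at_right 0)"
  proof -
    have "((\<lambda>t. (x - M * t) / sqrt \<epsilon>) \<longlongrightarrow> (x - M * 0) / sqrt \<epsilon>) (at_right 0)" by (intro tendsto_intros) (use ep in simp_all)
    then show ?thesis unfolding w_def[abs_def] by simp
  qed
  have ml: "(m \<longlongrightarrow> M * ((1 / M - 0) / sqrt \<epsilon>)) (at_right 0)"
    unfolding m_def[abs_def] by (intro tendsto_intros) (use ep in simp_all)
  have w0: "x / sqrt \<epsilon> > 0" using x ep by simp
  have m0: "M * ((1 / M - 0) / sqrt \<epsilon>) > 0" using M ep by simp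
  define Q where "Q t = (Y 0 (x - M*t) + W0e M Y V \<epsilon> (w t) t - cP Y)
 + sqrt \<epsilon> * (W12 M Y V (w t) t - dP Y * w t)
 + \<epsilon> * (t * Y 2 (x - M*t) + W1 M Y V (w t) t - eP Y * ((w t)^2/2 + t))
 + \<epsilon> powr (3/2) * (W32 M Y V (w t) t - hP Y * ((w t)^3 + 6*t*(w t)) - fP * w t)
 + exp (-M*z) * (- (Y 0 (1 - M*t) + W0e M Y V \<epsilon> (m t) t - cP Y)
     - sqrt \<epsilon> * ((W12 M Y V (m t) t - m t * dP Y) + W0d1 M Y V \<epsilon> (m t) t * z)
     + \<epsilon> * (- (t * Y 2 (1 - M*t) + W1 M Y V (m t) t - eP Y * ((m t)^2/2 + t))
         + (- Y 1 (1 - M*t) - W12d1 M Y V (m t) t + dP Y) * z - W0d2 M Y V \<epsilon> (m t) t * z^2/2)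
     + \<epsilon> powr (3/2) * (- (W32 M Y V (m t) t - hP Y * ((m t)^3 + 6*t*(m t)) - fP * m t)
         + (- W1d1 M Y V (m t) t + m t * eP Y) * z - W12d2 M Y V (m t) t * z^2/2 + (- W0d3 M Y V \<epsilon> (m t) t) * z^3/6))" for t
  have ev: "eventually (\<lambda>t. Ptil M Y V \<epsilon> x t = Q t) (at_right 0)"
  proof -
    have "eventually (\<lambda>t. t < x / M) (at_right (0::real))"
      unfolding eventually_at_right_field using x M by (intro exI[of _ "x/M"]) auto
    then show ?thesis using ev_pos
    proof eventually_elim
      case (elim t)
      then have c1: "M * t < x" using M by (simp add: field_simps)
      then have c2: "M * t < 1" "M * t \<le> 1" using x by auto
      show ?case
        unfolding Ptil_def Let_def Q_def w_def m_def z_def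
        using c1 c2 elim ep
        by (simp add: sel_def y0o_def y1o_def dxy0_def deriv_W0e deriv_W0d1 deriv_W0d2 deriv_W12 deriv_W12d1 deriv_W1)
    qed
  qed
  have y0x: "((\<lambda>t. Y 0 (x - M * t)) \<longlongrightarrow> Y 0 x) (at_right 0)" by (rule Y_lim[OF Y _ _ _ M]) (use x in auto)
  have y2x: "((\<lambda>t. Y 2 (x - M * t)) \<longlongrightarrow> Y 2 x) (at_right 0)" by (rule Y_lim[OF Y _ _ _ M]) (use x in auto)
  have y01: "((\<lambda>t. Y 0 (1 - M * t)) \<longlongrightarrow> Y 0 1) (at_right 0)" by (rule Y_lim[OF Y _ _ _ M]) auto
  have y11: "((\<lambda>t. Y 1 (1 - M * t)) \<longlongrightarrow> Y 1 1) (at_right 0)" by (rule Y_lim[OF Y _ _ _ M]) auto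
  have y21: "((\<lambda>t. Y 2 (1 - M * t)) \<longlongrightarrow> Y 2 1) (at_right 0)" by (rule Y_lim[OF Y _ _ _ M]) auto
  have idt: "((\<lambda>t::real. t) \<longlongrightarrow> 0) (at_right 0)" by (rule tendsto_ident_at)
  note lims = idt wl ml y0x y2x y01 y11 y21 W0e_lim[OF wl w0 M ep] W12_lim[OF wl w0 M ep] W1_lim[OF wl w0 M ep]
        W32_lim[OF wl w0 M ep] W0e_lim[OF ml m0 M ep] W12_lim[OF ml m0 M ep] W0d1_lim[OF ml m0 M ep]
        W1_lim[OF ml m0 M ep] W12d1_lim[OF ml m0 M ep] W0d2_lim[OF ml m0 M ep] W32_lim[OF ml m0 M ep]
        W1d1_lim[OF ml m0 M ep] W12d2_lim[OF ml m0 M ep] W0d3_lim[OF ml m0 M ep]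
  have "(Q \<longlongrightarrow> Y 0 x - exp (- M * ((1 - x) / \<epsilon>)) * (Y 0 1 + (1 - x) * Y 1 1)) (at_right 0)"
    unfolding Q_def[abs_def]
    apply (rule lims tendsto_eq_intros refl | (simp; fail))+
    using ep x unfolding z_def by (simp add: fP_def field_simps)
  then show ?thesis by (rule Lim_transform_eventually) (use ev in \<open>auto elim: eventually_mono\<close>)
qed


lemma cont_pair_sub:
  assumes "continuous_on A (\<lambda>(x,t). f x t)" "B \<subseteq> A"
  shows "continuous_on B (\<lambda>p. f (fst p) (snd p))"
  using continuous_on_subset[OF assms] by (simp add: case_prod_beta)

lemma energy_step:
  fixes M \<epsilon> T t1 t2 :: real and \<theta> \<theta>x \<theta>xx \<theta>t :: "real \<Rightarrow> real \<Rightarrow> real"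
  assumes "M > 0" "\<epsilon> > 0"
  and D: "\<forall>x\<in>{0<..<1}. \<forall>t\<in>{0<..<T}.
          ((\<lambda>y. \<theta> y t) has_real_derivative \<theta>x x t) (at x) \<and>
          ((\<lambda>y. \<theta>x y t) has_real_derivative \<theta>xx x t) (at x) \<and>
          ((\<lambda>s. \<theta> x s) has_real_derivative \<theta>t x t) (at t) \<and>
          \<theta>t x t + M * \<theta>x x t - \<epsilon> * \<theta>xx x t = 0"
  and cx: "continuous_on ({0<..<1} \<times> {0<..<T}) (\<lambda>(x,t). \<theta>x x t)"
  and cxx: "continuous_on ({0<..<1} \<times> {0<..<T}) (\<lambda>(x,t). \<theta>xx x t)"
  and c0: "continuous_on ({0..1} \<times> {0<..T}) (\<lambda>(x,t). \<theta> x t)"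
  and bd: "\<forall>t\<in>{0<..T}. \<theta> 0 t = 0 \<and> \<theta> 1 t = 0"
  and t12: "0 < t1" "t1 < t2" "t2 < T"
  shows "integral {0..1} (\<lambda>x. exp (2 * (M^2 / (4*\<epsilon>)) * t2) * exp (- (M/\<epsilon>) * x) * (\<theta> x t2)^2)
       \<le> integral {0..1} (\<lambda>x. exp (2 * (M^2 / (4*\<epsilon>)) * t1) * exp (- (M/\<epsilon>) * x) * (\<theta> x t1)^2)"
proof -
  define k where "k = M^2 / (4*\<epsilon>)"
  define m where "m = M / \<epsilon>"
  define R where "R x t = exp (2*k*t) * exp (- m * x) * (\<theta> x t)^2" for x t
  define Rx where "Rx x t = exp (2*k*t) * exp (- m * x) * (- m * (\<theta> x t)^2 + 2 * \<theta> x t * \<theta>x x t)" for x t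
  define Rxx where "Rxx x t = exp (2*k*t) * exp (- m * x) * (m^2 * (\<theta> x t)^2 - 4 * m * \<theta> x t * \<theta>x x t
                 + 2 * (\<theta>x x t)^2 + 2 * \<theta> x t * \<theta>xx x t)" for x t
  define Rt where "Rt x t = exp (2*k*t) * exp (- m * x) * (2 * k * (\<theta> x t)^2 + 2 * \<theta> x t * \<theta>t x t)" for x t
  have R_nonneg: "R x t \<ge> 0" for x t unfolding R_def by simp
  have dRx: "((\<lambda>y. R y t) has_real_derivative Rx x t) (at x)"
    and dRxx: "((\<lambda>y. Rx y t) has_real_derivative Rxx x t) (at x)"
    and dRt: "((\<lambda>s. R x s) has_real_derivative Rt x t) (at t)"
    if "x\<in>{0<..<1}" "t\<in>{0<..<T}" for x t
  proof -
    have h1: "((\<lambda>y. \<theta> y t) has_real_derivative \<theta>x x t) (at x)"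
     and h2: "((\<lambda>y. \<theta>x y t) has_real_derivative \<theta>xx x t) (at x)"
     and h3: "((\<lambda>s. \<theta> x s) has_real_derivative \<theta>t x t) (at t)"
      using D that by auto
    show "((\<lambda>y. R y t) has_real_derivative Rx x t) (at x)"
      unfolding R_def Rx_def
      by (rule derivative_eq_intros h1 refl | simp)+ (simp add: algebra_simps)
    show "((\<lambda>y. Rx y t) has_real_derivative Rxx x t) (at x)"
      unfolding Rxx_def Rx_def
      by (rule derivative_eq_intros h1 h2 refl | simp)+ (simp add: algebra_simps power2_eq_square)
    show "((\<lambda>s. R x s) has_real_derivative Rt x t) (at t)"
      unfolding R_def Rt_def
      by (rule derivative_eq_intros h3 refl | simp)+ (simp add: algebra_simps)
  qed
  have ineq: "Rt x t \<le> \<epsilon> * Rxx x t" if "x\<in>{0<..<1}" "t\<in>{0<..<T}" for x t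
  proof -
    have "\<theta>t x t + M * \<theta>x x t - \<epsilon> * \<theta>xx x t = 0" using D that by blast
    then have eq: "\<theta>t x t = \<epsilon> * \<theta>xx x t - M * \<theta>x x t" by linarith
    have "\<epsilon> * Rxx x t - Rt x t = exp (2*k*t) * exp (- m * x) * (2 * \<epsilon> * (\<theta>x x t - m/2 * \<theta> x t)^2)"
      unfolding Rxx_def Rt_def eq k_def m_def using \<open>\<epsilon> > 0\<close>
      by (simp add: field_simps power2_eq_square)
    also have "\<dots> \<ge> 0" using \<open>\<epsilon> > 0\<close> by simp
    finally show ?thesis by simp
  qed
  have Tpos: "0 < T" using t12 by linarith
  have cR: "continuous_on ({0..1} \<times> {t1..t2}) (\<lambda>p. R (fst p) (snd p))"
  proof -
    have "continuous_on ({0..1} \<times> {t1..t2}) (\<lambda>p. \<theta> (fst p) (snd p))"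
      by (rule cont_pair_sub[OF c0]) (use t12 in auto)
    then show ?thesis unfolding R_def by (intro continuous_intros)
  qed
  have sub1: "U \<times> {t1..t2} \<subseteq> {0<..<1} \<times> {0<..<T}" if "U \<subseteq> {0<..<1}" for U
    using that t12 by auto
  have cRx: "continuous_on (U \<times> {t1..t2}) (\<lambda>p. Rx (fst p) (snd p))"
   and cRxx: "continuous_on (U \<times> {t1..t2}) (\<lambda>p. Rxx (fst p) (snd p))"
    if "U \<subseteq> {0<..<1}" for U
  proof -
    have a: "continuous_on (U \<times> {t1..t2}) (\<lambda>p. \<theta> (fst p) (snd p))"
      by (rule cont_pair_sub[OF c0]) (use that t12 in auto)
    have b: "continuous_on (U \<times> {t1..t2}) (\<lambda>p. \<theta>x (fst p) (snd p))"
      by (rule cont_pair_sub[OF cx sub1[OF that]])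
    have c: "continuous_on (U \<times> {t1..t2}) (\<lambda>p. \<theta>xx (fst p) (snd p))"
      by (rule cont_pair_sub[OF cxx sub1[OF that]])
    show "continuous_on (U \<times> {t1..t2}) (\<lambda>p. Rx (fst p) (snd p))"
      unfolding Rx_def by (intro continuous_intros a b)
    show "continuous_on (U \<times> {t1..t2}) (\<lambda>p. Rxx (fst p) (snd p))"
      unfolding Rxx_def by (intro continuous_intros a b c)
  qed
  have ctime: "continuous_on {t1..t2} (\<lambda>t. f (x, t))" if "continuous_on (U \<times> {t1..t2}) f" "x \<in> U" for f :: "real \<times> real \<Rightarrow> real" and U x
  proof -
    have "continuous_on {t1..t2} (f \<circ> (\<lambda>t. (x, t)))"
      by (rule continuous_on_compose) (auto intro!: continuous_intros continuous_on_subset[OF that(1)] simp: that(2))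
    then show ?thesis by (simp add: o_def)
  qed
  have intR: "(\<lambda>t. R x t) integrable_on {t1..t2}" if "x \<in> {0..1}" for x
    using ctime[OF cR that] by (simp add: integrable_continuous_interval)
  have intRx: "(\<lambda>t. Rx x t) integrable_on {t1..t2}" if "x \<in> {0<..<1}" for x
    using ctime[OF cRx[OF order_refl] that] by (simp add: integrable_continuous_interval)
  have intRxx: "(\<lambda>t. Rxx x t) integrable_on {t1..t2}" if "x \<in> {0<..<1}" for x
    using ctime[OF cRxx[OF order_refl] that] by (simp add: integrable_continuous_interval)
  define S where "S x = integral {t1..t2} (\<lambda>t. R x t)" for x
  define S1 where "S1 x = integral {t1..t2} (\<lambda>t. Rx x t)" for x
  define S2 where "S2 x = integral {t1..t2} (\<lambda>t. Rxx x t)" for x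
  have Sc: "continuous_on {0..1} S"
  proof -
    have "continuous_on {0..1} (\<lambda>x. integral (cbox t1 t2) (\<lambda>t. R x t))"
      by (rule integral_continuous_on_param) (use cR in \<open>simp add: case_prod_beta\<close>)
    then show ?thesis unfolding S_def by simp
  qed
  have S01: "S 0 = 0" "S 1 = 0"
  proof -
    have z0: "R 0 t = 0" and z1: "R 1 t = 0" if "t \<in> {t1..t2}" for t
      using bd that t12 unfolding R_def by auto
    have "S 0 = integral {t1..t2} (\<lambda>_. 0::real)"
      unfolding S_def by (rule integral_cong) (rule z0)
    moreover have "S 1 = integral {t1..t2} (\<lambda>_. 0::real)"
      unfolding S_def by (rule integral_cong) (rule z1)
    ultimately have "S 0 = integral {t1..t2} (\<lambda>_. 0::real)" "S 1 = integral {t1..t2} (\<lambda>_. 0::real)" by auto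
    then show "S 0 = 0" "S 1 = 0" by simp_all
  qed
  have Snn: "S x \<ge> 0" if "x \<in> {0..1}" for x unfolding S_def using intR[OF that] by (intro integral_nonneg) (auto simp: R_nonneg)
  have leib: "((\<lambda>y. integral {t1..t2} (\<lambda>t. F y t)) has_real_derivative integral {t1..t2} (\<lambda>t. F' x t)) (at x)"
    if xin: "x \<in> {0<..<1}"
      and dF: "\<And>y t. y \<in> {0<..<1} \<Longrightarrow> t \<in> {0<..<T} \<Longrightarrow> ((\<lambda>y. F y t) has_real_derivative F' y t) (at y)"
      and iF: "\<And>y. y \<in> {0<..<1} \<Longrightarrow> (\<lambda>t. F y t) integrable_on {t1..t2}"
      and cF: "\<And>U. U \<subseteq> {0<..<1} \<Longrightarrow> continuous_on (U \<times> {t1..t2}) (\<lambda>p. F' (fst p) (snd p))"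
    for F F' :: "real \<Rightarrow> real \<Rightarrow> real" and x
  proof -
    define U where "U = {x/2 .. (1+x)/2}"
    have U: "U \<subseteq> {0<..<1}" "x \<in> U" "convex U" using xin unfolding U_def by auto
    have "((\<lambda>y. integral (cbox t1 t2) (F y)) has_field_derivative integral (cbox t1 t2) (F' x)) (at x within U)"
    proof (rule leibniz_rule_field_derivative)
      fix y t assume "y \<in> U" "t \<in> cbox t1 t2"
      then have "y \<in> {0<..<1}" "t \<in> {0<..<T}" using U t12 by auto
      from dF[OF this] show "((\<lambda>y. F y t) has_field_derivative F' y t) (at y within U)"
        by (rule has_field_derivative_at_within)
    next
      fix y assume "y \<in> U" then show "F y integrable_on cbox t1 t2" using iF U by auto
    next
      show "continuous_on (U \<times> cbox t1 t2) (\<lambda>(x, t). F' x t)"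
        using cF[OF U(1)] by (simp add: case_prod_beta)
    qed (use U in auto)
    moreover have "x \<in> interior U" using xin unfolding U_def by auto
    ultimately show ?thesis by (simp add: at_within_interior[of x U])
  qed
  have dS: "(S has_real_derivative S1 x) (at x)" if "x \<in> {0<..<1}" for x
    unfolding S_def S1_def
    by (rule leib[OF that dRx]) (auto intro: intR cRx)
  have dS1: "(S1 has_real_derivative S2 x) (at x)" if "x \<in> {0<..<1}" for x
    unfolding S1_def S2_def
    by (rule leib[OF that dRxx]) (auto intro: intRx cRxx)
  have Dle: "R x t2 - R x t1 \<le> \<epsilon> * S2 x" if "x \<in> {0<..<1}" for x
  proof -
    have "((\<lambda>t. Rt x t) has_integral (R x t2 - R x t1)) {t1..t2}"
    proof (rule fundamental_theorem_of_calculus)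
      show "t1 \<le> t2" using t12 by simp
      fix t assume "t \<in> {t1..t2}"
      then have "t \<in> {0<..<T}" using t12 by auto
      from dRt[OF that this] show "((\<lambda>s. R x s) has_vector_derivative Rt x t) (at t within {t1..t2})"
        by (simp add: has_real_derivative_iff_has_vector_derivative[symmetric] has_field_derivative_at_within)
    qed
    moreover have "((\<lambda>t. \<epsilon> * Rxx x t) has_integral \<epsilon> * S2 x) {t1..t2}"
      unfolding S2_def using intRxx[OF that] by (intro has_integral_mult_right) (simp add: integrable_integral)
    ultimately show ?thesis
      by (rule has_integral_le) (use ineq that t12 in auto)
  qed
  have key: "integral {a..b} (\<lambda>x. R x t2 - R x t1) \<le> \<epsilon> * (S1 b - S1 a)" if "0 < a" "a < b" "b < 1" for a b
  proof -
    have "((\<lambda>x. \<epsilon> * S2 x) has_integral \<epsilon> * (S1 b - S1 a)) {a..b}"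
    proof (rule has_integral_mult_right, rule fundamental_theorem_of_calculus)
      show "a \<le> b" using that by simp
      fix x assume "x \<in> {a..b}"
      then have "x \<in> {0<..<1}" using that by auto
      from dS1[OF this] show "(S1 has_vector_derivative S2 x) (at x within {a..b})"
        by (simp add: has_real_derivative_iff_has_vector_derivative[symmetric] has_field_derivative_at_within)
    qed
    moreover have "(\<lambda>x. R x t2 - R x t1) integrable_on {a..b}"
    proof -
      have "continuous_on {a..b} (\<lambda>x. R x t2 - R x t1)"
      proof -
        have "continuous_on {a..b} (\<lambda>x. (\<lambda>p. R (fst p) (snd p)) (x, t))" if "t \<in> {t1..t2}" for t
          by (rule continuous_on_compose2[OF cR]) (use \<open>0 < a\<close> \<open>b < 1\<close> that in \<open>auto intro!: continuous_intros\<close>)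
        then show ?thesis using t12 by (auto intro!: continuous_intros)
      qed
      then show ?thesis by (rule integrable_continuous_interval)
    qed
    ultimately show ?thesis
      by (intro has_integral_le[OF integrable_integral]) (use Dle that in auto)
  qed
  have cF: "continuous_on {0..1} (\<lambda>x. R x t)" if "t \<in> {t1..t2}" for t
  proof -
    have "continuous_on {0..1} (\<lambda>x. (\<lambda>p. R (fst p) (snd p)) (x, t))"
      by (rule continuous_on_compose2[OF cR]) (use that in \<open>auto intro!: continuous_intros\<close>)
    then show ?thesis by simp
  qed
  have iF: "(\<lambda>x. R x t) integrable_on {a..b}" if "t \<in> {t1..t2}" "0 \<le> a" "b \<le> 1" for t a b
    by (rule integrable_continuous_interval, rule continuous_on_subset[OF cF[OF that(1)]]) (use that in auto)
  obtain B where B: "\<And>x. x \<in> {0..1} \<Longrightarrow> R x t2 \<le> B"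
    using continuous_attains_sup[OF compact_Icc _ cF[of t2]] t12 by fastforce
  have B0: "B \<ge> 0" using B[of 0] R_nonneg[of 0 t2] by simp
  define I1 where "I1 = integral {0..1} (\<lambda>x. R x t1)"
  define I2 where "I2 = integral {0..1} (\<lambda>x. R x t2)"
  have main: "I2 \<le> I1 + 2 * B * \<delta>" if "0 < \<delta>" "\<delta> < 1/2" for \<delta>
  proof -
    have dif: "S differentiable (at x)" if "x \<in> {0<..<1}" for x
      using dS[OF that] by (auto simp: real_differentiable_def)
    have "\<exists>l z. 0 < z \<and> z < \<delta> \<and> DERIV S z :> l \<and> S \<delta> - S 0 = (\<delta> - 0) * l"
      by (rule MVT) (use that continuous_on_subset[OF Sc, of "{0..\<delta>}"] dif in auto)
    then obtain a l where a: "0 < a" "a < \<delta>" "(S has_real_derivative l) (at a)" "S \<delta> - S 0 = (\<delta> - 0) * l"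
      by blast
    have "l = S1 a" using a dS[of a] that by (auto intro: DERIV_unique)
    moreover have "S \<delta> \<ge> 0" using Snn that by auto
    ultimately have Sa: "S1 a \<ge> 0" using a S01 that by (simp add: zero_le_mult_iff)
    have "\<exists>l z. 1 - \<delta> < z \<and> z < 1 \<and> DERIV S z :> l \<and> S 1 - S (1 - \<delta>) = (1 - (1 - \<delta>)) * l"
      by (rule MVT) (use that continuous_on_subset[OF Sc, of "{1-\<delta>..1}"] dif in auto)
    then obtain b l' where b: "1 - \<delta> < b" "b < 1" "(S has_real_derivative l') (at b)" "S 1 - S (1 - \<delta>) = (1 - (1 - \<delta>)) * l'"
      by blast
    have "l' = S1 b" using b dS[of b] that by (auto intro: DERIV_unique)
    moreover have "S (1 - \<delta>) \<ge> 0" using Snn that by auto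
    ultimately have "\<delta> * S1 b \<le> 0" using b S01 that by simp
    then have Sb: "S1 b \<le> 0" using that by (simp add: mult_le_0_iff)
    have ab: "0 < a" "a < b" "b < 1" using a b that by auto
    have k: "integral {a..b} (\<lambda>x. R x t2 - R x t1) \<le> 0"
    proof -
      have "\<epsilon> * (S1 b - S1 a) \<le> 0" using Sa Sb \<open>\<epsilon> > 0\<close> by (intro mult_nonneg_nonpos) auto
      then show ?thesis using key[OF ab] by linarith
    qed
    have t2in: "t2 \<in> {t1..t2}" and t1in: "t1 \<in> {t1..t2}" using t12 by auto
    have e1: "integral {a..b} (\<lambda>x. R x t2 - R x t1) = integral {a..b} (\<lambda>x. R x t2) - integral {a..b} (\<lambda>x. R x t1)"
      by (rule integral_diff) (use iF[OF t2in] iF[OF t1in] ab in auto)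
    have e2: "integral {a..b} (\<lambda>x. R x t1) \<le> I1"
      unfolding I1_def by (rule integral_subset_le) (use iF[OF t1in] ab R_nonneg in auto)
    have s1: "integral {0..a} (\<lambda>x. R x t2) + integral {a..1} (\<lambda>x. R x t2) = I2"
      unfolding I2_def using ab by (intro Henstock_Kurzweil_Integration.integral_combine iF[OF t2in]) auto
    have s2: "integral {a..b} (\<lambda>x. R x t2) + integral {b..1} (\<lambda>x. R x t2) = integral {a..1} (\<lambda>x. R x t2)"
      using ab by (intro Henstock_Kurzweil_Integration.integral_combine iF[OF t2in]) auto
    have b1: "integral {0..a} (\<lambda>x. R x t2) \<le> B * a"
    proof -
      have "integral {0..a} (\<lambda>x. R x t2) \<le> integral {0..a} (\<lambda>x. B)"
        by (rule integral_le) (use iF[OF t2in] ab B in auto)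
      then show ?thesis using ab by (simp add: mult.commute)
    qed
    have b2: "integral {b..1} (\<lambda>x. R x t2) \<le> B * (1 - b)"
    proof -
      have "integral {b..1} (\<lambda>x. R x t2) \<le> integral {b..1} (\<lambda>x. B)"
        by (rule integral_le) (use iF[OF t2in] ab B in auto)
      then show ?thesis using ab by (simp add: mult.commute)
    qed
    have "B * a \<le> B * \<delta>" "B * (1 - b) \<le> B * \<delta>" using a b B0 by (auto intro!: mult_left_mono)
    then have "B * a + B * (1 - b) \<le> 2 * B * \<delta>" by linarith
    then show ?thesis using k e1 e2 s1 s2 b1 b2 by linarith
  qed
  have "I2 \<le> I1"
  proof (rule ccontr)
    assume "\<not> I2 \<le> I1"
    define \<delta> where "\<delta> = min (1/4) ((I2 - I1) / (4 * (B + 1)))"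
    have "0 < \<delta>" "\<delta> < 1/2" using \<open>\<not> I2 \<le> I1\<close> B0 unfolding \<delta>_def by auto
    from main[OF this] have "I2 \<le> I1 + 2 * B * \<delta>" .
    moreover have "2 * B * \<delta> \<le> (I2 - I1) / 2"
    proof -
      have "\<delta> \<le> (I2 - I1) / (4 * (B + 1))" unfolding \<delta>_def by simp
      then have "2 * B * \<delta> \<le> 2 * B * ((I2 - I1) / (4 * (B + 1)))" using B0 by (intro mult_left_mono) auto
      also have "\<dots> \<le> (I2 - I1) / 2" using B0 \<open>\<not> I2 \<le> I1\<close> by (simp add: field_simps)
      finally show ?thesis .
    qed
    ultimately show False using \<open>\<not> I2 \<le> I1\<close> by argo
  qed
  then show ?thesis unfolding I1_def I2_def R_def k_def m_def .
qed

lemma LINT_eq_integral01: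
  fixes f g :: "real \<Rightarrow> real"
  assumes "\<And>x. x \<in> {0<..<1} \<Longrightarrow> f x = g x" "continuous_on {0..1} g"
  shows "(LINT x:{0..1}|lborel. f x) = integral {0..1} g"
proof -
  have "(LINT x:{0..1}|lborel. f x) = (LINT x:{0<..<1}|lborel. f x)"
    by (rule set_integral_discrete_difference[where X="{0,1}"]) auto
  also have "\<dots> = (LINT x:{0<..<1}|lborel. g x)"
    by (rule set_lebesgue_integral_cong) (use assms in auto)
  also have "\<dots> = (LINT x:{0..1}|lborel. g x)"
    by (rule set_integral_discrete_difference[where X="{0,1}"]) auto
  also have "\<dots> = integral {0..1} g"
    by (rule set_borel_integral_eq_integral(2)[OF borel_integrable_atLeastAtMost'[OF assms(2)]])
  finally show ?thesis .
qed

lemma energy_bound: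
  fixes M \<epsilon> T :: real and \<theta> \<theta>x \<theta>xx \<theta>t :: "real \<Rightarrow> real \<Rightarrow> real" and \<theta>0 g :: "real \<Rightarrow> real"
  assumes "M > 0" "\<epsilon> > 0"
  and D: "\<forall>x\<in>{0<..<1}. \<forall>t\<in>{0<..<T}.
          ((\<lambda>y. \<theta> y t) has_real_derivative \<theta>x x t) (at x) \<and>
          ((\<lambda>y. \<theta>x y t) has_real_derivative \<theta>xx x t) (at x) \<and>
          ((\<lambda>s. \<theta> x s) has_real_derivative \<theta>t x t) (at t) \<and>
          \<theta>t x t + M * \<theta>x x t - \<epsilon> * \<theta>xx x t = 0"
  and cx: "continuous_on ({0<..<1} \<times> {0<..<T}) (\<lambda>(x,t). \<theta>x x t)"
  and cxx: "continuous_on ({0<..<1} \<times> {0<..<T}) (\<lambda>(x,t). \<theta>xx x t)"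
  and c0: "continuous_on ({0..1} \<times> {0<..T}) (\<lambda>(x,t). \<theta> x t)"
  and bd: "\<forall>t\<in>{0<..T}. \<theta> 0 t = 0 \<and> \<theta> 1 t = 0"
  and L2: "((\<lambda>t. LINT x:{0..1}|lborel. (\<theta> x t - \<theta>0 x)^2) \<longlongrightarrow> 0) (at_right 0)"
  and g: "\<And>x. x \<in> {0<..<1} \<Longrightarrow> \<theta>0 x = g x" "continuous_on {0..1} g"
  and t: "0 < t" "t \<le> T"
  shows "integral {0..1} (\<lambda>x. (\<theta> x t)^2)
       \<le> 2 * exp (M/\<epsilon>) * exp (- 2 * (M^2 / (4*\<epsilon>)) * t) * integral {0..1} (\<lambda>x. exp (- (M/\<epsilon>) * x) * (g x)^2)"
proof -
  define k where "k = M^2 / (4*\<epsilon>)"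
  define m where "m = M / \<epsilon>"
  define E where "E t = integral {0..1} (\<lambda>x. exp (2 * k * t) * exp (- m * x) * (\<theta> x t)^2)" for t
  define Ig where "Ig = integral {0..1} (\<lambda>x. exp (- m * x) * (g x)^2)"
  have cth: "continuous_on {0..1} (\<lambda>x. \<theta> x s)" if "s \<in> {0<..T}" for s
  proof -
    have "continuous_on {0..1} (\<lambda>x. (\<lambda>p. \<theta> (fst p) (snd p)) (x, s))"
      by (rule continuous_on_compose2[OF cont_pair_sub[OF c0 order_refl]]) (use that in \<open>auto intro!: continuous_intros\<close>)
    then show ?thesis by simp
  qed
  have step: "E t2 \<le> E t1" if "0 < t1" "t1 < t2" "t2 < T" for t1 t2
    unfolding E_def k_def m_def using energy_step[OF assms(1,2) D cx cxx c0 bd that] by simp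
  have init: "E t1 \<le> exp (2 * k * t1) * (2 * Ig + 2 * (LINT x:{0..1}|lborel. (\<theta> x t1 - \<theta>0 x)^2))"
    if "0 < t1" "t1 \<le> T" for t1
  proof -
    have ct: "continuous_on {0..1} (\<lambda>x. \<theta> x t1)" using cth that by auto
    have L: "(LINT x:{0..1}|lborel. (\<theta> x t1 - \<theta>0 x)^2) = integral {0..1} (\<lambda>x. (\<theta> x t1 - g x)^2)"
      by (rule LINT_eq_integral01) (use g ct in \<open>auto intro!: continuous_intros\<close>)
    have "integral {0..1} (\<lambda>x. exp (- m * x) * (\<theta> x t1)^2)
        \<le> integral {0..1} (\<lambda>x. 2 * (exp (- m * x) * (g x)^2) + 2 * (\<theta> x t1 - g x)^2)"
    proof (rule integral_le)
      show "(\<lambda>x. exp (- m * x) * (\<theta> x t1)^2) integrable_on {0..1}"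
        by (rule integrable_continuous_interval) (use ct g in \<open>auto intro!: continuous_intros\<close>)
      show "(\<lambda>x. 2 * (exp (- m * x) * (g x)^2) + 2 * (\<theta> x t1 - g x)^2) integrable_on {0..1}"
        by (rule integrable_continuous_interval) (use ct g in \<open>auto intro!: continuous_intros\<close>)
      fix x :: real assume x: "x \<in> {0..1}"
      have "0 \<le> m" unfolding m_def using \<open>M > 0\<close> \<open>\<epsilon> > 0\<close> by simp
      then have "0 \<le> m * x" using x by simp
      then have q: "0 < exp (- m * x)" "exp (- m * x) \<le> 1" by simp_all
      have "2 * (g x)^2 + 2 * (\<theta> x t1 - g x)^2 - (\<theta> x t1)^2 = (2 * g x - \<theta> x t1)^2"
        by (simp add: power2_eq_square algebra_simps)
      then have "(\<theta> x t1)^2 \<le> 2 * (g x)^2 + 2 * (\<theta> x t1 - g x)^2"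
        by (metis diff_ge_0_iff_ge zero_le_power2)
      then have "exp (- m * x) * (\<theta> x t1)^2 \<le> exp (- m * x) * (2 * (g x)^2 + 2 * (\<theta> x t1 - g x)^2)"
        using q by (intro mult_left_mono) auto
      also have "\<dots> \<le> 2 * (exp (- m * x) * (g x)^2) + 2 * (\<theta> x t1 - g x)^2"
      proof -
        have "exp (- m * x) * (\<theta> x t1 - g x)^2 \<le> (\<theta> x t1 - g x)^2"
          using q by (intro mult_left_le_one_le) auto
        then show ?thesis by (simp add: algebra_simps)
      qed
      finally show "exp (- m * x) * (\<theta> x t1)^2 \<le> 2 * (exp (- m * x) * (g x)^2) + 2 * (\<theta> x t1 - g x)^2" .
    qed
    also have "\<dots> = 2 * Ig + 2 * integral {0..1} (\<lambda>x. (\<theta> x t1 - g x)^2)"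
    proof -
      have i1: "(\<lambda>x. exp (- m * x) * (g x)^2) integrable_on {0..1}"
        by (rule integrable_continuous_interval) (use g in \<open>auto intro!: continuous_intros\<close>)
      have i2: "(\<lambda>x. (\<theta> x t1 - g x)^2) integrable_on {0..1}"
        by (rule integrable_continuous_interval) (use ct g in \<open>auto intro!: continuous_intros\<close>)
      show ?thesis unfolding Ig_def
        using integral_add[OF integrable_cmul[OF i1, of 2] integrable_cmul[OF i2, of 2]] by simp
    qed
    finally have *: "integral {0..1} (\<lambda>x. exp (- m * x) * (\<theta> x t1)^2) \<le> 2 * Ig + 2 * (LINT x:{0..1}|lborel. (\<theta> x t1 - \<theta>0 x)^2)"
      using L by simp
    have "E t1 = exp (2 * k * t1) * integral {0..1} (\<lambda>x. exp (- m * x) * (\<theta> x t1)^2)"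
      unfolding E_def by (simp add: mult.assoc)
    with * show ?thesis by (simp add: mult_left_mono)
  qed
  have Elt: "E s \<le> 2 * Ig" if "0 < s" "s < T" for s
  proof -
    have "((\<lambda>t1. exp (2 * k * t1) * (2 * Ig + 2 * (LINT x:{0..1}|lborel. (\<theta> x t1 - \<theta>0 x)^2))) \<longlongrightarrow> exp (2 * k * 0) * (2 * Ig + 2 * 0)) (at_right 0)"
      by (intro tendsto_intros L2)
    then have lim: "((\<lambda>t1. exp (2 * k * t1) * (2 * Ig + 2 * (LINT x:{0..1}|lborel. (\<theta> x t1 - \<theta>0 x)^2))) \<longlongrightarrow> 2 * Ig) (at_right 0)"
      by simp
    have ev: "eventually (\<lambda>t1. E s \<le> exp (2 * k * t1) * (2 * Ig + 2 * (LINT x:{0..1}|lborel. (\<theta> x t1 - \<theta>0 x)^2))) (at_right 0)"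
    proof -
      have "eventually (\<lambda>t1. t1 < s) (at_right (0::real))" using that unfolding eventually_at_right_field by auto
      moreover have "eventually (\<lambda>t1. 0 < t1) (at_right (0::real))" by (simp add: eventually_at_right_less)
      ultimately show ?thesis
      proof eventually_elim
        case (elim t1)
        then have "E s \<le> E t1" using step[of t1 s] that by auto
        also have "\<dots> \<le> exp (2 * k * t1) * (2 * Ig + 2 * (LINT x:{0..1}|lborel. (\<theta> x t1 - \<theta>0 x)^2))"
          using init[of t1] elim that by auto
        finally show ?case .
      qed
    qed
    show ?thesis by (rule tendsto_le[OF _ lim tendsto_const ev]) simp
  qed
  have Et: "E t \<le> 2 * Ig"
  proof (cases "t < T")
    case True then show ?thesis using Elt t by auto
  next
    case False
    then have tT: "t = T" using t by auto
    have Tpos: "0 < T" using t by auto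
    have cE: "continuous_on {T/2..T} E"
    proof -
      have c1: "continuous_on ({T/2..T} \<times> {0..1}) (\<lambda>p. \<theta> (snd p) (fst p))"
        by (rule continuous_on_compose2[OF cont_pair_sub[OF c0 order_refl], of _ "\<lambda>p. (snd p, fst p)", simplified])
           (use Tpos in \<open>auto intro!: continuous_intros\<close>)
      have "continuous_on {T/2..T} (\<lambda>s. integral (cbox 0 1) (\<lambda>x. exp (2 * k * s) * exp (- m * x) * (\<theta> x s)^2))"
        by (rule integral_continuous_on_param) (use c1 in \<open>auto simp: case_prod_beta intro!: continuous_intros\<close>)
      then show ?thesis unfolding E_def by simp
    qed
    have lim: "(E \<longlongrightarrow> E T) (at_left T)"
      by (rule continuous_on_Icc_at_leftD[OF cE]) (use Tpos in simp)
    have ev: "eventually (\<lambda>s. E s \<le> 2 * Ig) (at_left T)"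
    proof -
      have "eventually (\<lambda>s. T/2 < s \<and> s < T) (at_left T)"
        using Tpos unfolding eventually_at_left_field by (intro exI[of _ "T/2"]) auto
      then show ?thesis by eventually_elim (use Elt Tpos in auto)
    qed
    have "E T \<le> 2 * Ig" by (rule tendsto_le[OF _ tendsto_const lim ev]) simp
    then show ?thesis using tT by simp
  qed
  have "integral {0..1} (\<lambda>x. (\<theta> x t)^2) \<le> integral {0..1} (\<lambda>x. exp m * (exp (- m * x) * (\<theta> x t)^2))"
  proof (rule integral_le)
    have ct: "continuous_on {0..1} (\<lambda>x. \<theta> x t)" using cth t by auto
    show "(\<lambda>x. (\<theta> x t)^2) integrable_on {0..1}"
      by (rule integrable_continuous_interval) (use ct in \<open>auto intro!: continuous_intros\<close>)
    show "(\<lambda>x. exp m * (exp (- m * x) * (\<theta> x t)^2)) integrable_on {0..1}"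
      by (rule integrable_continuous_interval) (use ct in \<open>auto intro!: continuous_intros\<close>)
    fix x :: real assume x: "x \<in> {0..1}"
    have "0 \<le> m" unfolding m_def using \<open>M > 0\<close> \<open>\<epsilon> > 0\<close> by simp
    then have "m * x \<le> m" using x by (simp add: mult_left_le)
    then have "1 \<le> exp m * exp (- m * x)" by (simp add: exp_minus field_simps)
    then have "1 * (\<theta> x t)^2 \<le> exp m * exp (- m * x) * (\<theta> x t)^2" by (intro mult_right_mono) auto
    then show "(\<theta> x t)^2 \<le> exp m * (exp (- m * x) * (\<theta> x t)^2)" by (simp add: mult.assoc)
  qed
  also have "\<dots> = exp m * exp (- 2 * k * t) * E t"
  proof -
    have pw: "exp m * (exp (- m * x) * y) = (exp m * exp (- 2*k*t)) * (exp (2*k*t) * exp (- m * x) * y)" for x y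
    proof -
      have "exp (- 2*k*t) * exp (2*k*t) = 1" by (simp flip: exp_add)
      then show ?thesis by (simp add: algebra_simps)
    qed
    show ?thesis unfolding E_def pw by (rule integral_mult_right)
  qed
  also have "\<dots> \<le> exp m * exp (- 2 * k * t) * (2 * Ig)" using Et by (intro mult_left_mono) auto
  finally show ?thesis unfolding Ig_def m_def k_def by (simp add: mult.assoc mult.left_commute)
qed


lemma int_exp_bound:
  fixes a :: real assumes a: "a > 0"
  shows "integral {0..1} (\<lambda>x. exp (a * x)) \<le> exp a / a"
proof -
  have "((\<lambda>x. exp (a * x)) has_integral (exp (a * 1) / a - exp (a * 0) / a)) {0..1}"
  proof (rule fundamental_theorem_of_calculus)
    fix x :: real assume "x \<in> {0..1}"
    have "((\<lambda>x. exp (a * x) / a) has_real_derivative exp (a * x)) (at x)"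
      using a by (auto intro!: derivative_eq_intros)
    then show "((\<lambda>x. exp (a * x) / a) has_vector_derivative exp (a * x)) (at x within {0..1})"
      by (simp add: has_real_derivative_iff_has_vector_derivative[symmetric] has_field_derivative_at_within)
  qed simp
  then have "integral {0..1} (\<lambda>x. exp (a * x)) = exp a / a - 1 / a" by (simp add: integral_unique)
  then show ?thesis using a by simp
qed

lemma Ig_bound:
  fixes M \<epsilon> K :: real and g :: "real \<Rightarrow> real"
  assumes M: "M > 0" and ep: "\<epsilon> > 0" and gc: "continuous_on {0..1} g"
    and gb: "\<And>x. x \<in> {0..1} \<Longrightarrow> \<bar>g x\<bar> \<le> K * exp (- M * ((1 - x) / \<epsilon>))"
  shows "integral {0..1} (\<lambda>x. exp (- (M/\<epsilon>) * x) * (g x)^2) \<le> K^2 * (\<epsilon> / M) * exp (- (M/\<epsilon>))"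
proof -
  have "integral {0..1} (\<lambda>x. exp (- (M/\<epsilon>) * x) * (g x)^2) \<le> integral {0..1} (\<lambda>x. (K^2 * exp (- 2 * (M/\<epsilon>))) * exp ((M/\<epsilon>) * x))"
  proof (rule integral_le)
    show "(\<lambda>x. exp (- (M/\<epsilon>) * x) * (g x)^2) integrable_on {0..1}"
      by (rule integrable_continuous_interval) (use gc ep in \<open>auto intro!: continuous_intros\<close>)
    show "(\<lambda>x. (K^2 * exp (- 2 * (M/\<epsilon>))) * exp ((M/\<epsilon>) * x)) integrable_on {0..1}"
      by (rule integrable_continuous_interval) (use ep in \<open>auto intro!: continuous_intros\<close>)
    fix x :: real assume x: "x \<in> {0..1}"
    have "(g x)^2 = \<bar>g x\<bar>^2" by simp
    also have "\<dots> \<le> (K * exp (- M * ((1 - x) / \<epsilon>)))^2"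
      by (rule power_mono[OF gb[OF x]]) simp
    also have "\<dots> = K^2 * exp (- 2 * M * ((1 - x) / \<epsilon>))"
      by (simp add: power_mult_distrib power2_eq_square flip: exp_add)
    finally have "exp (- (M/\<epsilon>) * x) * (g x)^2 \<le> exp (- (M/\<epsilon>) * x) * (K^2 * exp (- 2 * M * ((1 - x) / \<epsilon>)))"
      by (intro mult_left_mono) auto
    also have "\<dots> = (K^2 * exp (- 2 * (M/\<epsilon>))) * exp ((M/\<epsilon>) * x)"
    proof -
      have "- (M/\<epsilon>) * x + (- 2 * M * ((1 - x) / \<epsilon>)) = - 2 * (M/\<epsilon>) + (M/\<epsilon>) * x"
        using ep by (simp add: field_simps)
      then have "exp (- (M/\<epsilon>) * x) * exp (- 2 * M * ((1 - x) / \<epsilon>)) = exp (- 2 * (M/\<epsilon>)) * exp ((M/\<epsilon>) * x)"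
        by (simp flip: exp_add)
      then show ?thesis by (simp add: algebra_simps)
    qed
    finally show "exp (- (M/\<epsilon>) * x) * (g x)^2 \<le> (K^2 * exp (- 2 * (M/\<epsilon>))) * exp ((M/\<epsilon>) * x)" .
  qed
  also have "\<dots> = (K^2 * exp (- 2 * (M/\<epsilon>))) * integral {0..1} (\<lambda>x. exp ((M/\<epsilon>) * x))"
    by (rule integral_mult_right)
  also have "\<dots> \<le> (K^2 * exp (- 2 * (M/\<epsilon>))) * (exp (M/\<epsilon>) / (M/\<epsilon>))"
    by (rule mult_left_mono[OF int_exp_bound]) (use M ep in auto)
  also have "\<dots> = K^2 * (\<epsilon> / M) * exp (- (M/\<epsilon>))"
  proof -
    have "exp (- 2 * (M/\<epsilon>)) * exp (M/\<epsilon>) = exp (- (M/\<epsilon>))" by (simp flip: exp_add)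
    then show ?thesis using M ep by (simp add: field_simps)
  qed
  finally show ?thesis .
qed

lemma exponent_bound:
  fixes M \<epsilon> \<gamma> t T :: real
  assumes "M > 0" "0 < \<epsilon>" "\<epsilon> < 1" "0 < \<gamma>" "\<gamma> \<le> 1/2" "0 \<le> t" "t \<le> T"
  shows "- (M^2 / (4*\<epsilon>)) * t \<le> M^2 * T + (- (M^2 / (2 * \<epsilon> powr \<gamma>)) * t)"
proof -
  define s where "s = sqrt \<epsilon>"
  have s: "s > 0" "\<epsilon> = s^2" using assms unfolding s_def by auto
  have "\<epsilon> powr (1/2) \<le> \<epsilon> powr \<gamma>" by (rule powr_mono') (use assms in auto)
  then have pg: "s \<le> \<epsilon> powr \<gamma>" unfolding s_def using assms by (simp add: powr_half_sqrt)
  have "M^2 / (2 * \<epsilon> powr \<gamma>) \<le> M^2 / (2 * s)"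
    using pg s by (intro divide_left_mono) auto
  moreover have "M^2 / (2 * s) - M^2 / (4 * \<epsilon>) \<le> M^2 / 4"
  proof -
    have "M^2 / (2 * s) - M^2 / (4 * \<epsilon>) = M^2 / 4 - M^2 * (s - 1)^2 / (4 * s^2)"
      using s by (simp add: field_simps power2_eq_square)
    moreover have "M^2 * (s - 1)^2 / (4 * s^2) \<ge> 0" by simp
    ultimately show ?thesis by linarith
  qed
  ultimately have "(M^2 / (2 * \<epsilon> powr \<gamma>) - M^2 / (4 * \<epsilon>)) \<le> M^2 / 4" by linarith
  then have "(M^2 / (2 * \<epsilon> powr \<gamma>) - M^2 / (4 * \<epsilon>)) * t \<le> M^2 / 4 * t"
    using assms by (intro mult_right_mono) auto
  also have "\<dots> \<le> M^2 * T" using assms by (simp add: mult_left_mono)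
  finally show ?thesis by (simp add: algebra_simps)
qed


theorem lemma4p1:
  fixes M T \<gamma> :: real and Y V :: "nat \<Rightarrow> real \<Rightarrow> real"
  assumes "M > 0" and "T \<ge> 1 / M"
    and "C4_on {0..1} Y" and "C4_on {0..T} V"
    and "0 < \<gamma>" and "\<gamma> \<le> 1/2"
  shows "\<exists>c. \<forall>\<epsilon>\<in>{0<..<1}. \<forall>\<theta>.
           is_solution M \<epsilon> T (\<lambda>x. Ptil0 M Y V \<epsilon> x - Y 0 x) \<theta> \<longrightarrow>
           (\<forall>t\<in>{0..T}. L2norm01 (\<lambda>x. \<theta> x t)
              \<le> c * exp (- (\<epsilon> powr \<gamma> / \<epsilon>)) + c * sqrt \<epsilon> * exp (- (M^2 / (2 * \<epsilon> powr \<gamma>)) * t))"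
proof -
  have M: "M > 0" using assms(1) .
  have Y: "C4_on {0..1} Y" using assms(3) .
  define K where "K = \<bar>Y 0 1\<bar> + \<bar>Y 1 1\<bar>"
  define c where "c = K * sqrt (2 / M) * exp (M^2 * T)"
  have K0: "K \<ge> 0" unfolding K_def by simp
  have c0: "c \<ge> 0" unfolding c_def using K0 M by simp
  show ?thesis
  proof (intro exI[of _ c] ballI allI impI)
    fix \<epsilon> :: real and \<theta> :: "real \<Rightarrow> real \<Rightarrow> real" and t :: real
    assume ep1: "\<epsilon> \<in> {0<..<1}" and sol: "is_solution M \<epsilon> T (\<lambda>x. Ptil0 M Y V \<epsilon> x - Y 0 x) \<theta>" and tT: "t \<in> {0..T}"
    have ep: "\<epsilon> > 0" "\<epsilon> < 1" using ep1 by auto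
    define g where "g x = - exp (- M * ((1 - x) / \<epsilon>)) * (Y 0 1 + (1 - x) * Y 1 1)" for x
    have th0: "Ptil0 M Y V \<epsilon> x - Y 0 x = g x" if "x \<in> {0<..<1}" for x
    proof -
      have "Ptil0 M Y V \<epsilon> x = Y 0 x - exp (- M * ((1 - x) / \<epsilon>)) * (Y 0 1 + (1 - x) * Y 1 1)"
        unfolding Ptil0_def using that
        by (intro tendsto_Lim Ptil_lim[OF M ep(1) Y]) auto
      then show ?thesis unfolding g_def by simp
    qed
    have gc: "continuous_on {0..1} g" unfolding g_def using ep by (auto intro!: continuous_intros)
    have gb: "\<bar>g x\<bar> \<le> K * exp (- M * ((1 - x) / \<epsilon>))" if "x \<in> {0..1}" for x
    proof -
      have "\<bar>Y 0 1 + (1 - x) * Y 1 1\<bar> \<le> \<bar>Y 0 1\<bar> + \<bar>1 - x\<bar> * \<bar>Y 1 1\<bar>"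
        by (metis abs_mult abs_triangle_ineq)
      also have "\<dots> \<le> K" unfolding K_def using that by (auto intro!: mult_left_le_one_le)
      finally have "\<bar>Y 0 1 + (1 - x) * Y 1 1\<bar> \<le> K" .
      then show ?thesis unfolding g_def by (simp add: abs_mult mult.commute mult_left_mono)
    qed
    define Ig where "Ig = integral {0..1} (\<lambda>x. exp (- (M/\<epsilon>) * x) * (g x)^2)"
    have Ig: "Ig \<le> K^2 * (\<epsilon> / M) * exp (- (M/\<epsilon>))"
      unfolding Ig_def by (rule Ig_bound[OF M ep(1) gc gb])
    from sol obtain \<theta>x \<theta>xx \<theta>t where
      D: "\<forall>x\<in>{0<..<1}. \<forall>t\<in>{0<..<T}.
          ((\<lambda>y. \<theta> y t) has_real_derivative \<theta>x x t) (at x) \<and>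
          ((\<lambda>y. \<theta>x y t) has_real_derivative \<theta>xx x t) (at x) \<and>
          ((\<lambda>s. \<theta> x s) has_real_derivative \<theta>t x t) (at t) \<and>
          \<theta>t x t + M * \<theta>x x t - \<epsilon> * \<theta>xx x t = 0"
      and cx: "continuous_on ({0<..<1} \<times> {0<..<T}) (\<lambda>(x,t). \<theta>x x t)"
      and cxx: "continuous_on ({0<..<1} \<times> {0<..<T}) (\<lambda>(x,t). \<theta>xx x t)"
      and cc0: "continuous_on ({0..1} \<times> {0<..T}) (\<lambda>(x,t). \<theta> x t)"
      and bd: "\<forall>t\<in>{0<..T}. \<theta> 0 t = 0 \<and> \<theta> 1 t = 0"
      and ini: "\<forall>x\<in>{0<..<1}. \<theta> x 0 = Ptil0 M Y V \<epsilon> x - Y 0 x"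
      and L2: "((\<lambda>t. LINT x:{0..1}|lborel. (\<theta> x t - (Ptil0 M Y V \<epsilon> x - Y 0 x))^2) \<longlongrightarrow> 0) (at_right 0)"
      unfolding is_solution_def by blast
    define k where "k = M^2 / (4*\<epsilon>)"
    have main: "(LINT x:{0..1}|lborel. (\<theta> x t)^2) \<le> 2 * K^2 * (\<epsilon> / M) * exp (- 2 * k * t)"
    proof (cases "t = 0")
      case True
      have "(LINT x:{0..1}|lborel. (\<theta> x t)^2) = integral {0..1} (\<lambda>x. (g x)^2)"
        by (rule LINT_eq_integral01) (use True ini th0 gc in \<open>auto intro!: continuous_intros\<close>)
      also have "\<dots> \<le> integral {0..1} (\<lambda>x. exp (M/\<epsilon>) * (exp (- (M/\<epsilon>) * x) * (g x)^2))"
      proof (rule integral_le)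
        show "(\<lambda>x. (g x)^2) integrable_on {0..1}"
          by (rule integrable_continuous_interval) (use gc in \<open>auto intro!: continuous_intros\<close>)
        show "(\<lambda>x. exp (M/\<epsilon>) * (exp (- (M/\<epsilon>) * x) * (g x)^2)) integrable_on {0..1}"
          by (rule integrable_continuous_interval) (use gc ep in \<open>auto intro!: continuous_intros\<close>)
        fix x :: real assume x: "x \<in> {0..1}"
        have "0 \<le> M/\<epsilon>" using M ep by simp
        then have "(M/\<epsilon>) * x \<le> (M/\<epsilon>) * 1" using x by (intro mult_left_mono) auto
        then have "(M/\<epsilon>) * x \<le> M/\<epsilon>" by simp
        then have "1 \<le> exp (M/\<epsilon>) * exp (- (M/\<epsilon>) * x)" by (simp add: exp_minus field_simps)
        then have "1 * (g x)^2 \<le> exp (M/\<epsilon>) * exp (- (M/\<epsilon>) * x) * (g x)^2" by (intro mult_right_mono) auto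
        then show "(g x)^2 \<le> exp (M/\<epsilon>) * (exp (- (M/\<epsilon>) * x) * (g x)^2)" by (simp add: mult.assoc)
      qed
      also have "\<dots> = exp (M/\<epsilon>) * Ig" unfolding Ig_def by (rule integral_mult_right)
      also have "\<dots> \<le> exp (M/\<epsilon>) * (K^2 * (\<epsilon> / M) * exp (- (M/\<epsilon>)))" using Ig by (intro mult_left_mono) auto
      also have "\<dots> = K^2 * (\<epsilon> / M)" by (simp add: exp_minus field_simps)
      also have "\<dots> \<le> 2 * K^2 * (\<epsilon> / M) * exp (- 2 * k * t)"
      proof -
        have nn: "0 \<le> K^2 * (\<epsilon> / M)" using M ep by simp
        have e: "2 * K^2 * (\<epsilon> / M) * exp (- 2 * k * t) = 2 * (K^2 * (\<epsilon> / M))" using True by simp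
        define X where "X = K^2 * (\<epsilon> / M)"
        have "X \<le> 2 * X" using nn unfolding X_def[symmetric] by linarith
        then show ?thesis unfolding e X_def .
      qed
      finally show ?thesis .
    next
      case False
      then have t0: "0 < t" "t \<le> T" using tT by auto
      have ct: "continuous_on {0..1} (\<lambda>x. \<theta> x t)"
      proof -
        have "continuous_on {0..1} (\<lambda>x. (\<lambda>p. \<theta> (fst p) (snd p)) (x, t))"
          by (rule continuous_on_compose2[OF cont_pair_sub[OF cc0 order_refl]]) (use t0 in \<open>auto intro!: continuous_intros\<close>)
        then show ?thesis by simp
      qed
      have "(LINT x:{0..1}|lborel. (\<theta> x t)^2) = integral {0..1} (\<lambda>x. (\<theta> x t)^2)"
        by (rule LINT_eq_integral01) (use ct in \<open>auto intro!: continuous_intros\<close>)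
      also have "\<dots> \<le> 2 * exp (M/\<epsilon>) * exp (- 2 * (M^2 / (4*\<epsilon>)) * t) * Ig"
        unfolding Ig_def by (rule energy_bound[OF M ep(1) D cx cxx cc0 bd L2 th0 gc t0]) auto
      also have "\<dots> \<le> 2 * exp (M/\<epsilon>) * exp (- 2 * (M^2 / (4*\<epsilon>)) * t) * (K^2 * (\<epsilon> / M) * exp (- (M/\<epsilon>)))"
        using Ig by (intro mult_left_mono) auto
      also have "\<dots> = 2 * K^2 * (\<epsilon> / M) * exp (- 2 * k * t)"
        unfolding k_def by (simp add: exp_minus field_simps)
      finally show ?thesis .
    qed
    define B where "B = K * sqrt (2 / M) * sqrt \<epsilon> * exp (- k * t)"
    have B0: "B \<ge> 0" unfolding B_def using K0 M ep by simp
    have "L2norm01 (\<lambda>x. \<theta> x t) = sqrt (LINT x:{0..1}|lborel. (\<theta> x t)^2)" unfolding L2norm01_def ..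
    also have "\<dots> \<le> sqrt (2 * K^2 * (\<epsilon> / M) * exp (- 2 * k * t))" using main by simp
    also have "2 * K^2 * (\<epsilon> / M) * exp (- 2 * k * t) = B^2"
    proof -
      have "exp (- 2 * k * t) = (exp (- k * t))^2" by (simp flip: exp_add add: power2_eq_square)
      then show ?thesis unfolding B_def using M ep by (simp add: power_mult_distrib real_sqrt_pow2)
    qed
    also have "sqrt (B^2) = B" using B0 by simp
    also have "B \<le> c * sqrt \<epsilon> * exp (- (M^2 / (2 * \<epsilon> powr \<gamma>)) * t)"
    proof -
      have "- k * t \<le> M^2 * T + (- (M^2 / (2 * \<epsilon> powr \<gamma>)) * t)"
        unfolding k_def by (rule exponent_bound) (use M ep assms(5,6) tT in auto)
      then have "exp (- k * t) \<le> exp (M^2 * T) * exp (- (M^2 / (2 * \<epsilon> powr \<gamma>)) * t)"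
        by (simp flip: exp_add)
      then have "K * sqrt (2 / M) * sqrt \<epsilon> * exp (- k * t) \<le> K * sqrt (2 / M) * sqrt \<epsilon> * (exp (M^2 * T) * exp (- (M^2 / (2 * \<epsilon> powr \<gamma>)) * t))"
        using K0 M ep by (intro mult_left_mono) auto
      then show ?thesis unfolding B_def c_def by (simp add: algebra_simps)
    qed
    also have "\<dots> \<le> c * exp (- (\<epsilon> powr \<gamma> / \<epsilon>)) + c * sqrt \<epsilon> * exp (- (M^2 / (2 * \<epsilon> powr \<gamma>)) * t)"
      using c0 by simp
    finally show "L2norm01 (\<lambda>x. \<theta> x t) \<le> c * exp (- (\<epsilon> powr \<gamma> / \<epsilon>)) + c * sqrt \<epsilon> * exp (- (M^2 / (2 * \<epsilon> powr \<gamma>)) * t)" .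
  qed
qed


end
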